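(* Let $\rho>0$, $A>0$, $R>0$, $J>0$, $C_f>0$ be constants, let $a'<0$ be a constant, let $\beta\in[\beta_{\min},\beta_{\max}]$ and $V_w>0$ be constants, and let $C_p:(0,\infty)\times[\beta_{\min},\beta_{\max}]\to\mathbb{R}$ satisfy: (A1) $C_p(\lambda,\beta)$ is continuously differentiable in both $\lambda$ and $\beta$ on $(0,\infty)\times[\beta_{\min},\beta_{\max}]$; (A2) there exists $c\in(0,\infty)$ with $C_p(\lambda,\beta)\le c\lambda$ for all $\lambda\in(0,\infty)$, $\beta\in[\beta_{\min},\beta_{\max}]$; (A3) for each fixed $\beta\in[\beta_{\min},\beta_{\max}]$ there exists $\lambda_1\in(0,\infty)$ with $C_p(\lambda,\beta)>0$ for all $\lambda\in(0,\lambda_1)$; (A4) there exist $\underline{c}\in(-\infty,0)$ and $\overline{c}\in(0,\infty)$ with $\underline{c}\le\frac{\partial}{\partial\lambda}\big(\frac{C_p(\lambda,\beta)}{\lambda}\big)\le\overline{c}$ for all $\lambda\in(0,\infty)$, $\beta\in[\beta_{\min},\beta_{\max}]$. Define, for $\omega_r>0$, $$g(\omega_r,\beta,V_w)=\frac{\tfrac12\rho A\, C_p\!\big(\tfrac{\omega_r R}{V_w},\beta\big)V_w^3}{\omega_r}-a'-C_f\omega_r .$$ Let $\omega_r^{(1)}\in(0,\infty)$ be such that $g(\omega_r^{(1)},\beta,V_w)=0$ and $g(\omega_r,\beta,V_w)>0$ for all $\omega_r\in(0,\omega_r^{(1)})$, and let $\underline{\gamma}\in(-\infty,0)$, $\overline{\gamma}\in(0,\infty)$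 be such that $\underline{\gamma}\le\frac{\partial}{\partial\omega_r}g(\omega_r,\beta,V_w)\le\overline{\gamma}$ for all $\omega_r\in(0,\infty)$. Consider the closed-loop system in the state $(\omega_r,\hat g)$: $$\dot\omega_r=\frac1J\Big(g(\omega_r,\beta,V_w)-\max\Big\{\hat g+\alpha\ln\frac{\omega_r}{\omega_{rd}},\,0\Big\}\Big),\qquad \dot{\hat g}=\frac hJ\big(g(\omega_r,\beta,V_w)-\hat g\big),$$ where $\omega_{rd}$ is a constant with $0<\omega_{rd}\le\omega_r^{(1)}$, and $\alpha,h\in\mathbb{R}$ are gains. Let $D=\{(\omega_r,\hat g):0<\omega_r\le\omega_r^{(1)},\ \hat g\in\mathbb{R}\}\subset\mathbb{R}^2$. If $\alpha>0$ and $$h>\overline{\gamma}\ \text{ if }\ \overline{\gamma}\ge-\tfrac13\underline{\gamma},\qquad h>-\frac{(\overline{\gamma}-\underline{\gamma})^2}{8(\underline{\gamma}+\overline{\gamma})}\ \text{ otherwise},$$ then: (i) the system has a unique equilibrium point in $D$, namely $(\omega_{rd},g(\omega_{rd},\beta,V_w))$; (ii) $D$ is positively invariant, i.e., if $(\omega_r(0),\hat g(0))\in D$ then $(\omega_r(t),\hat g(t))\in D$ for all $t\ge0$; and (iii) the equilibrium point $(\omega_{rd},g(\omega_{rd},\beta,V_w))$ is locally asymptotically stable with domain of attraction $D$.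
   Context: This models a wind turbine rotor: $\omega_r$ is the rotor angular velocity, $\omega_{rd}$ its desired value, $\hat g$ an estimate of the lumped uncertainty $g$, $J$ the moment of inertia, $C_f$ the friction coefficient, $\rho$ the air density, $A=\pi R^2$ the swept area of blades of radius $R$, $V_w$ the wind speed, $\beta$ the blade pitch angle, and $C_p(\lambda,\beta)$ the performance coefficient as a function of tip speed ratio $\lambda=\omega_r R/V_w$ and pitch. The constant $a'$ equals $-\frac{v_{ds}^2+v_{qs}^2}{4\omega_s R_s}$ for electrical parameters with $\omega_s,R_s>0$ and $(v_{ds},v_{qs})\neq(0,0)$, hence is negative. The paper asserts that under (A1)–(A4) a point $\omega_r^{(1)}$ and constants $\underline\gamma,\overline\gamma$ as described exist. *)

theory Defs
  imports "HOL-Analysis.Analysis"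
begin

definition C1_on2 :: "(real \<Rightarrow> real \<Rightarrow> real) \<Rightarrow> (real \<times> real) set \<Rightarrow> bool" where
  "C1_on2 Cp S \<longleftrightarrow>
     (\<exists>Dl Db :: real \<times> real \<Rightarrow> real.
        continuous_on S Dl \<and> continuous_on S Db \<and>
        (\<forall>p\<in>S. ((\<lambda>q. Cp (fst q) (snd q)) has_derivative
                   (\<lambda>u. Dl p * fst u + Db p * snd u)) (at p within S)))"

definition gfun :: "real \<Rightarrow> real \<Rightarrow> real \<Rightarrow> real \<Rightarrow> real \<Rightarrow> (real \<Rightarrow> real \<Rightarrow> real)
                    \<Rightarrow> real \<Rightarrow> real \<Rightarrow> real \<Rightarrow> real" where
  "gfun rho A R Cf a' Cp beta Vw w =
     (1/2 * rho * A * Cp (w * R / Vw) beta * Vw ^ 3) / w - a' - Cf * w"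

definition cl_field :: "real \<Rightarrow> real \<Rightarrow> real \<Rightarrow> real \<Rightarrow> (real \<Rightarrow> real)
                        \<Rightarrow> real \<times> real \<Rightarrow> real \<times> real" where
  "cl_field J alpha h wrd g p =
     (let w = fst p; gh = snd p in
      ((g w - max (gh + alpha * ln (w / wrd)) 0) / J, h / J * (g w - gh)))"

definition is_solution :: "(real \<times> real \<Rightarrow> real \<times> real) \<Rightarrow> (real \<Rightarrow> real \<times> real)
                           \<Rightarrow> real set \<Rightarrow> bool" where
  "is_solution F x S \<longleftrightarrow>
     is_interval S \<and> 0 \<in> S \<and> S \<subseteq> {0..} \<and>
     (\<forall>t\<in>S. fst (x t) > 0 \<and> (x has_vector_derivative F (x t)) (at t within S))"

end

theory Submission
  imports Defs "HOL-Analysis.Analysis"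
begin

fun picard :: "(real \<times> real \<Rightarrow> real \<times> real) \<Rightarrow> real \<times> real \<Rightarrow> nat \<Rightarrow> real \<Rightarrow> real \<times> real" where
  "picard F p 0 = (\<lambda>t. p)"
| "picard F p (Suc n) = (\<lambda>t. p + integral {0..t} (\<lambda>s. F (picard F p n s)))"

lemma lip_cont:
  fixes F :: "real \<times> real \<Rightarrow> real \<times> real"
  assumes lip: "\<And>u v. norm (F u - F v) \<le> K * norm (u - v)" and "K \<ge> 0"
  shows "continuous_on UNIV F"
proof -
  show ?thesis
  proof (rule continuous_on_iff[THEN iffD2], intro ballI allI impI)
    fix x and e::real assume "e > 0"
    show "\<exists>d>0. \<forall>x'\<in>UNIV. dist x' x < d \<longrightarrow> dist (F x') (F x) < e"
    proof (intro exI[of _ "e/(K+1)"] conjI ballI impI)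
      show "e/(K+1) > 0" using \<open>e>0\<close> \<open>K\<ge>0\<close> by simp
      fix x' assume "dist x' x < e/(K+1)"
      have "dist (F x') (F x) \<le> K * dist x' x" using lip[of x' x] by (simp add: dist_norm)
      also have "\<dots> \<le> K * (e/(K+1))"
        using \<open>dist x' x < e/(K+1)\<close> \<open>K\<ge>0\<close> by (intro mult_left_mono) auto
      also have "\<dots> < e" using \<open>e>0\<close> \<open>K\<ge>0\<close> by (simp add: field_simps)
      finally show "dist (F x') (F x) < e" .
    qed
  qed
qed

lemma picard_cont:
  assumes cF: "continuous_on UNIV F"
  shows "continuous_on {0..T} (picard F p n)"
proof (induction n arbitrary: T)
  case 0 then show ?case by simp
next
  case (Suc n)
  have c: "continuous_on {0..T} (\<lambda>s. F (picard F p n s))"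
    using continuous_on_compose2[OF cF Suc.IH] by auto
  have "continuous_on {0..T} (\<lambda>u. integral {0..u} (\<lambda>s. F (picard F p n s)))"
    using integral_has_vector_derivative[OF c]
    by (meson continuous_on_eq_continuous_within has_vector_derivative_continuous)
  then show ?case by (simp add: continuous_on_add)
qed

lemma power_integral:
  assumes "t \<ge> 0"
  shows "((\<lambda>s::real. s ^ n) has_integral t ^ Suc n / real (Suc n)) {0..t}"
proof -
  have "((\<lambda>s::real. s ^ n) has_integral (t ^ Suc n / real (Suc n) - 0 ^ Suc n / real (Suc n))) {0..t}"
  proof (rule fundamental_theorem_of_calculus[OF assms])
    fix x :: real assume "x \<in> {0..t}"
    have "((\<lambda>s::real. s ^ Suc n / real (Suc n)) has_real_derivative (real (Suc n) * x ^ n / real (Suc n))) (at x within {0..t})"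
      using DERIV_cdivide[OF DERIV_pow[of "Suc n" x], of "real (Suc n)"]
      by (simp add: has_field_derivative_at_within del: of_nat_Suc)
    then show "((\<lambda>s::real. s ^ Suc n / real (Suc n)) has_vector_derivative x ^ n) (at x within {0..t})"
      by (simp add: has_real_derivative_iff_has_vector_derivative del: of_nat_Suc)
  qed
  then show ?thesis by simp
qed

lemma picard_est:
  assumes lip: "\<And>u v. norm (F u - F v) \<le> K * norm (u - v)" and K: "K \<ge> 0"
    and t: "t \<ge> 0"
  shows "norm (picard F p (Suc n) t - picard F p n t) \<le> norm (F p) * K ^ n * t ^ Suc n / fact (Suc n)"
  using t
proof (induction n arbitrary: t)
  case 0
  then show ?case by simp
next
  case (Suc n)
  have cF: "continuous_on UNIV F" using lip_cont[OF lip K] .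
  have i1: "(\<lambda>s. F (picard F p (Suc n) s)) integrable_on {0..t}"
    by (rule integrable_continuous_real, rule continuous_on_compose2[OF cF picard_cont[OF cF]]) auto
  have i2: "(\<lambda>s. F (picard F p n s)) integrable_on {0..t}"
    by (rule integrable_continuous_real, rule continuous_on_compose2[OF cF picard_cont[OF cF]]) auto
  define c where "c = norm (F p) * K ^ Suc n / fact (Suc n)"
  have hi: "((\<lambda>s. c * s ^ Suc n) has_integral c * (t ^ Suc (Suc n) / real (Suc (Suc n)))) {0..t}"
    using has_integral_mult_right[OF power_integral[OF Suc.prems, of "Suc n"], of c] by simp
  have "norm (picard F p (Suc (Suc n)) t - picard F p (Suc n) t)
      = norm (integral {0..t} (\<lambda>s. F (picard F p (Suc n) s) - F (picard F p n s)))"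
  proof -
    have "picard F p (Suc (Suc n)) t - picard F p (Suc n) t = integral {0..t} (\<lambda>s. F (picard F p (Suc n) s)) - integral {0..t} (\<lambda>s. F (picard F p n s))"
      by (simp only: picard.simps) simp
    then show ?thesis by (simp only: integral_diff[OF i1 i2])
  qed
  also have "\<dots> \<le> integral {0..t} (\<lambda>s. c * s ^ Suc n)"
  proof (rule integral_norm_bound_integral)
    show "(\<lambda>s. F (picard F p (Suc n) s) - F (picard F p n s)) integrable_on {0..t}"
      using i1 i2 by (rule integrable_diff)
    show "(\<lambda>s. c * s ^ Suc n) integrable_on {0..t}" using hi by blast
    fix s assume s: "s \<in> {0..t}"
    have "norm (F (picard F p (Suc n) s) - F (picard F p n s)) \<le> K * norm (picard F p (Suc n) s - picard F p n s)"
      by (rule lip)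
    also have "\<dots> \<le> K * (norm (F p) * K ^ n * s ^ Suc n / fact (Suc n))"
      using Suc.IH[of s] s K by (intro mult_left_mono) auto
    also have "\<dots> = c * s ^ Suc n" by (simp add: c_def)
    finally show "norm (F (picard F p (Suc n) s) - F (picard F p n s)) \<le> c * s ^ Suc n" .
  qed
  also have "\<dots> = c * (t ^ Suc (Suc n) / real (Suc (Suc n)))" using integral_unique[OF hi] by simp
  also have "\<dots> = norm (F p) * K ^ Suc n * t ^ Suc (Suc n) / fact (Suc (Suc n))"
  proof -
    have f: "fact (Suc (Suc n)) = real (Suc (Suc n)) * fact (Suc n)" by simp
    show ?thesis unfolding c_def f by simp
  qed
  finally show ?case .
qed

lemma picard_exists:
  fixes F :: "real \<times> real \<Rightarrow> real \<times> real"
  assumes lip: "\<And>u v. norm (F u - F v) \<le> K * norm (u - v)" and K: "K \<ge> 0"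
  shows "\<exists>x. x 0 = p \<and> (\<forall>t\<ge>0. (x has_vector_derivative F (x t)) (at t within {0..}))"
proof -
  have cF: "continuous_on UNIV F" using lip_cont[OF lip K] .
  define d where "d i t = picard F p (Suc i) t - picard F p i t" for i t
  define x where "x t = p + (\<Sum>i. d i t)" for t
  define M where "M T i = norm (F p) * K ^ i * T ^ Suc i / fact (Suc i)" for T :: real and i
  have summ: "summable (M T)" if T: "T \<ge> 0" for T
  proof (rule summable_comparison_test)
    show "summable (\<lambda>i. norm (F p) * T * (inverse (fact i) * (K * T) ^ i))"
      by (intro summable_mult summable_exp)
    show "\<exists>N. \<forall>n\<ge>N. norm (M T n) \<le> norm (F p) * T * (inverse (fact n) * (K * T) ^ n)"
    proof (intro exI allI impI)
      fix n :: nat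
      have "fact n \<le> (fact (Suc n) :: real)" by (rule fact_mono) auto
      have nn: "0 \<le> norm (F p) * K ^ n * T ^ Suc n" using T K by simp
      have "M T n = norm (F p) * K ^ n * T ^ Suc n / fact (Suc n)" by (simp add: M_def)
      also have "\<dots> \<le> norm (F p) * K ^ n * T ^ Suc n / fact n"
        by (rule divide_left_mono[OF \<open>fact n \<le> fact (Suc n)\<close> nn]) auto
      also have "\<dots> = norm (F p) * T * (inverse (fact n) * (K * T) ^ n)"
        by (simp add: power_mult_distrib field_simps)
      finally show "norm (M T n) \<le> norm (F p) * T * (inverse (fact n) * (K * T) ^ n)"
        using nn by (simp add: M_def)
    qed
  qed
  have dbound: "norm (d i t) \<le> M T i" if "t \<in> {0..T}" for i t T
  proof -
    have "norm (d i t) \<le> norm (F p) * K ^ i * t ^ Suc i / fact (Suc i)"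
      unfolding d_def using picard_est[OF lip K] that by simp
    also have "\<dots> \<le> M T i" unfolding M_def using that K
      by (intro divide_right_mono mult_left_mono power_mono) auto
    finally show ?thesis .
  qed
  have UL: "uniform_limit {0..T} (picard F p) x sequentially" if T: "T \<ge> 0" for T
  proof -
    have "uniform_limit {0..T} (\<lambda>n t. \<Sum>i<n. d i t) (\<lambda>t. suminf (\<lambda>i. d i t)) sequentially"
      by (rule Weierstrass_m_test[OF dbound summ[OF T]])
    then have "uniform_limit {0..T} (\<lambda>n t. p + (\<Sum>i<n. d i t)) (\<lambda>t. p + suminf (\<lambda>i. d i t)) sequentially"
      by (intro uniform_limit_add uniform_limit_const)
    moreover have "(\<lambda>n t. p + (\<Sum>i<n. d i t)) = picard F p"
    proof (intro ext)
      fix n t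
      show "p + (\<Sum>i<n. d i t) = picard F p n t"
        using sum_lessThan_telescope[of "\<lambda>i. picard F p i t" n] by (simp add: d_def del: picard.simps(2))
    qed
    ultimately show ?thesis by (simp add: x_def[abs_def])
  qed
  have xcont: "continuous_on {0..T} x" if T: "T \<ge> 0" for T
    by (rule uniform_limit_theorem[OF _ UL[OF T]]) (auto intro: always_eventually picard_cont[OF cF])
  have Fxcont: "continuous_on {0..T} (\<lambda>s. F (x s))" if T: "T \<ge> 0" for T
    using continuous_on_compose2[OF cF xcont[OF T]] by auto
  have inteq: "x t = p + integral {0..t} (\<lambda>s. F (x s))" if t: "t \<ge> 0" for t
  proof -
    have l0: "(\<lambda>n. picard F p n t) \<longlonglongrightarrow> x t"
      using tendsto_uniform_limitI[OF UL[OF t], of t] t by simp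
    have l1: "(\<lambda>n. p + integral {0..t} (\<lambda>s. F (picard F p n s))) \<longlonglongrightarrow> x t"
      using LIMSEQ_Suc[OF l0] by simp
    have l2: "(\<lambda>n. integral {0..t} (\<lambda>s. F (picard F p n s))) \<longlonglongrightarrow> integral {0..t} (\<lambda>s. F (x s))"
    proof (rule tendstoI)
      fix e :: real assume e: "e > 0"
      have e2: "e / (K * t + 1) > 0" using e mult_nonneg_nonneg[OF K t] by (intro divide_pos_pos) linarith+
      show "\<forall>\<^sub>F n in sequentially. dist (integral {0..t} (\<lambda>s. F (picard F p n s))) (integral {0..t} (\<lambda>s. F (x s))) < e"
        using uniform_limitD[OF UL[OF t] e2]
      proof eventually_elim
        case (elim n)
        have i1: "(\<lambda>s. F (picard F p n s)) integrable_on {0..t}"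
          by (rule integrable_continuous_real, rule continuous_on_compose2[OF cF picard_cont[OF cF]]) auto
        have i2: "(\<lambda>s. F (x s)) integrable_on {0..t}"
          by (rule integrable_continuous_real, rule Fxcont[OF t])
        have "dist (integral {0..t} (\<lambda>s. F (picard F p n s))) (integral {0..t} (\<lambda>s. F (x s)))
            = norm (integral {0..t} (\<lambda>s. F (picard F p n s) - F (x s)))"
          by (simp add: dist_norm integral_diff[OF i1 i2])
        also have "\<dots> \<le> integral {0..t} (\<lambda>s. K * (e / (K * t + 1)))"
        proof (rule integral_norm_bound_integral)
          show "(\<lambda>s. F (picard F p n s) - F (x s)) integrable_on {0..t}" using i1 i2 by (rule integrable_diff)
          show "(\<lambda>s. K * (e / (K * t + 1))) integrable_on {0..t}" by (rule integrable_const_ivl)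
          fix s assume s: "s \<in> {0..t}"
          have "norm (F (picard F p n s) - F (x s)) \<le> K * norm (picard F p n s - x s)" by (rule lip)
          also have "\<dots> \<le> K * (e / (K * t + 1))"
            using elim s K by (intro mult_left_mono) (auto simp: dist_norm less_imp_le)
          finally show "norm (F (picard F p n s) - F (x s)) \<le> K * (e / (K * t + 1))" .
        qed
        also have "\<dots> = t * (K * (e / (K * t + 1)))" using t by simp
        also have "\<dots> < e"
        proof -
          have kt: "K * t \<ge> 0" using K t by simp
          have "t * (K * (e / (K * t + 1))) = e * (K * t / (K * t + 1))" by (simp add: field_simps)
          also have "\<dots> < e * 1" using kt e by (intro mult_strict_left_mono) auto
          finally show ?thesis by simp
        qed
        finally show ?case .
      qed
    qed
    have "(\<lambda>n. p + integral {0..t} (\<lambda>s. F (picard F p n s))) \<longlonglongrightarrow> p + integral {0..t} (\<lambda>s. F (x s))"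
      using tendsto_add[OF tendsto_const l2] .
    from LIMSEQ_unique[OF l1 this] show ?thesis .
  qed
  have "x 0 = p" using inteq[of 0] by simp
  moreover have "(x has_vector_derivative F (x t)) (at t within {0..})" if t: "t \<ge> 0" for t
  proof -
    have T: "t + 1 \<ge> 0" using t by simp
    have "((\<lambda>u. integral {0..u} (\<lambda>s. F (x s))) has_vector_derivative F (x t)) (at t within {0..t+1})"
      by (rule integral_has_vector_derivative[OF Fxcont[OF T]]) (use t in auto)
    then have "((\<lambda>u. p + integral {0..u} (\<lambda>s. F (x s))) has_vector_derivative F (x t)) (at t within {0..t+1})"
      using has_vector_derivative_add_const[of "\<lambda>u. integral {0..u} (\<lambda>s. F (x s))" p] by (simp add: add.commute)
    then have "(x has_vector_derivative F (x t)) (at t within {0..t+1})"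
      by (rule has_vector_derivative_transform[rotated 2]) (use t inteq in auto)
    moreover have "at t within {0..t+1} = at t within {0..}"
      by (rule at_within_nhd[where S="{..<t+1}"]) auto
    ultimately show ?thesis by simp
  qed
  ultimately show ?thesis by blast
qed



lemma mono_deriv:
  fixes f f' :: "real \<Rightarrow> real"
  assumes ab: "a \<le> b" and cont: "continuous_on {a..b} f"
    and der: "\<And>s. a < s \<Longrightarrow> s < b \<Longrightarrow> (f has_real_derivative f' s) (at s) \<and> f' s \<le> 0"
  shows "f b \<le> f a"
proof (cases "a = b")
  case True then show ?thesis by simp
next
  case False
  then have "a < b" using ab by simp
  from MVT[OF this cont] der obtain l z where z: "a < z" "z < b" "DERIV f z :> l" "f b - f a = (b - a) * l"
    by (meson real_differentiable_def)
  have "l = f' z" using der[OF z(1,2)] z(3) DERIV_unique by blast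
  then have "l \<le> 0" using der[OF z(1,2)] by simp
  have "(b - a) * l \<le> 0" using \<open>l \<le> 0\<close> \<open>a < b\<close> by (intro mult_nonneg_nonpos) auto
  then show ?thesis using z(4) by linarith
qed

lemma cross:
  fixes f f' :: "real \<Rightarrow> real"
  assumes ab: "a \<le> b" and cont: "continuous_on {a..b} f" and fa: "f a \<le> c"
    and der: "\<And>s. a < s \<Longrightarrow> s < b \<Longrightarrow> f s > c \<Longrightarrow> (f has_real_derivative f' s) (at s) \<and> f' s \<le> k * (f s - c)"
  shows "f b \<le> c"
proof (rule ccontr)
  assume nb: "\<not> f b \<le> c"
  define Z where "Z = {s \<in> {a..b}. f s \<le> c}"
  have "Z = {a..b} \<inter> f -` {..c}" by (auto simp: Z_def)
  then have cl: "closed Z" using continuous_closed_preimage[OF cont closed_atLeastAtMost, of "{..c}"] by simp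
  have "a \<in> Z" using ab fa by (simp add: Z_def)
  have bdd: "bdd_above Z" by (rule bdd_aboveI[of _ b]) (auto simp: Z_def)
  define t0 where "t0 = Sup Z"
  have t0Z: "t0 \<in> Z" unfolding t0_def using closed_contains_Sup[OF _ bdd cl] \<open>a \<in> Z\<close> by blast
  have at0: "a \<le> t0" using cSup_upper[OF \<open>a\<in>Z\<close> bdd] by (simp add: t0_def)
  have t0b: "t0 < b" using t0Z nb by (cases "t0 = b") (auto simp: Z_def)
  have gt: "f s > c" if "t0 < s" "s \<le> b" for s
  proof (rule ccontr)
    assume "\<not> f s > c"
    then have "s \<in> Z" using that at0 by (auto simp: Z_def)
    then have "s \<le> t0" using cSup_upper[OF _ bdd] by (simp add: t0_def)
    then show False using that by simp
  qed
  define \<phi> where "\<phi> s = (f s - c) * exp (- k * s)" for s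
  have c1: "continuous_on {t0..b} f" using cont by (rule continuous_on_subset) (use at0 in auto)
  have c2: "continuous_on {t0..b} \<phi>" unfolding \<phi>_def by (intro continuous_intros c1)
  have d2: "(\<phi> has_real_derivative (f' s - k * (f s - c)) * exp (- k * s)) (at s) \<and> (f' s - k * (f s - c)) * exp (- k * s) \<le> 0"
    if s: "t0 < s" "s < b" for s
  proof -
    have fs: "f s > c" using gt s by simp
    from der[OF _ s(2) fs] s at0 have d: "(f has_real_derivative f' s) (at s)" and le: "f' s \<le> k * (f s - c)" by auto
    have e: "((\<lambda>s. exp (- k * s)) has_real_derivative exp (- k * s) * (- k * 1)) (at s)"
      by (rule DERIV_fun_exp[OF DERIV_cmult[OF DERIV_ident]])
    have "(\<phi> has_real_derivative ((f' s - 0) * exp (- k * s) + (f s - c) * (exp (- k * s) * (- k * 1)))) (at s)"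
      unfolding \<phi>_def by (rule DERIV_cong[OF DERIV_mult[OF DERIV_diff[OF d DERIV_const] e]]) simp
    moreover have "(f' s - 0) * exp (- k * s) + (f s - c) * (exp (- k * s) * (- k * 1)) = (f' s - k * (f s - c)) * exp (- k * s)"
      by (simp add: algebra_simps)
    ultimately show ?thesis
      using le by (simp add: mult_nonpos_nonneg)
  qed
  have tb: "t0 \<le> b" using t0b by simp
  have A: "\<phi> b \<le> \<phi> t0"
    apply (rule mono_deriv[OF tb c2])
    apply (rule d2)
    apply assumption+
    done
  have B: "\<phi> t0 \<le> 0" unfolding \<phi>_def
    by (rule mult_nonpos_nonneg) (use t0Z Z_def in auto)
  have C: "\<phi> b > 0" unfolding \<phi>_def using nb by (intro mult_pos_pos) auto
  show False using A B C by linarith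
qed

lemma vd_fst: "(x has_vector_derivative v) F \<Longrightarrow> ((\<lambda>t. fst (x t)) has_real_derivative fst v) F"
  unfolding has_vector_derivative_def has_field_derivative_def
proof -
  assume "(x has_derivative (\<lambda>h. h *\<^sub>R v)) F"
  from has_derivative_fst[OF this] have "((\<lambda>t. fst (x t)) has_derivative (\<lambda>h. h * fst v)) F" by simp
  moreover have "(\<lambda>h. h * fst v) = (*) (fst v)" by (auto simp: mult.commute)
  ultimately show "((\<lambda>t. fst (x t)) has_derivative (*) (fst v)) F" by simp
qed

lemma vd_snd: "(x has_vector_derivative v) F \<Longrightarrow> ((\<lambda>t. snd (x t)) has_real_derivative snd v) F"
  unfolding has_vector_derivative_def has_field_derivative_def
proof -
  assume "(x has_derivative (\<lambda>h. h *\<^sub>R v)) F"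
  from has_derivative_snd[OF this] have "((\<lambda>t. snd (x t)) has_derivative (\<lambda>h. h * snd v)) F" by simp
  moreover have "(\<lambda>h. h * snd v) = (*) (snd v)" by (auto simp: mult.commute)
  ultimately show "((\<lambda>t. snd (x t)) has_derivative (*) (snd v)) F" by simp
qed

lemma interval_sub:
  fixes S :: "real set"
  assumes "is_interval S" "a \<in> S" "b \<in> S"
  shows "{a..b} \<subseteq> S"
proof
  fix x assume x: "x \<in> {a..b}"
  from assms(1) have I: "\<forall>a\<in>S. \<forall>b\<in>S. \<forall>x. a \<le> x \<and> x \<le> b \<longrightarrow> x \<in> S" by (simp only: is_interval_1)
  from x have "a \<le> x \<and> x \<le> b" by simp
  with I assms(2,3) show "x \<in> S" by blast
qed

lemma deriv_interior:
  fixes S :: "real set"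
  assumes "is_interval S" "a \<in> S" "b \<in> S" "a < s" "s < b"
    and "(x has_vector_derivative v) (at s within S)"
  shows "(x has_vector_derivative v) (at s)"
proof -
  have "s \<in> interior {a..b}" using assms by simp
  then have "s \<in> interior S" by (rule subsetD[OF interior_mono[OF interval_sub[OF assms(1-3)]]])
  then have "at s within S = at s" by (rule at_within_interior)
  then show ?thesis using assms(6) by simp
qed

lemma cont_sol:
  fixes S :: "real set"
  assumes "\<And>t. t \<in> S \<Longrightarrow> (x has_vector_derivative F (x t)) (at t within S)"
  shows "continuous_on S x"
  unfolding continuous_on_eq_continuous_within
  using assms has_vector_derivative_continuous by blast



lemma key_alg:
  fixes aa c h \<gamma> G z e :: real
  assumes a: "aa > 0" and c: "c > 0" and cond: "(1 + c * \<gamma>)^2 < 4 * c * h"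
    and G: "G \<ge> 0" and Gz: "z < 0 \<longrightarrow> G > 0"
  shows "(G - max (G - e + aa * z) 0) * (aa * z + c * \<gamma> * e) - c * h * e^2 \<le> 0"
    and "z \<noteq> 0 \<or> e \<noteq> 0 \<Longrightarrow> (G - max (G - e + aa * z) 0) * (aa * z + c * \<gamma> * e) - c * h * e^2 < 0"
proof -
  define Q where "Q = -(aa^2 * z^2) + aa * (1 - c * \<gamma>) * z * e - c * (h - \<gamma>) * e^2"
  have id: "4 * aa^2 * (- Q) = (2 * aa^2 * z - aa * (1 - c * \<gamma>) * e)^2 + aa^2 * (4 * c * h - (1 + c * \<gamma>)^2) * e^2"
    unfolding Q_def by (simp add: algebra_simps power2_eq_square)
  have pos: "4 * c * h - (1 + c * \<gamma>)^2 > 0" using cond by simp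
  have a2: "aa^2 > 0" using a by simp
  have Qle: "Q \<le> 0"
  proof -
    have "0 \<le> (2 * aa^2 * z - aa * (1 - c * \<gamma>) * e)^2 + aa^2 * (4 * c * h - (1 + c * \<gamma>)^2) * e^2"
      using pos a2 by (intro add_nonneg_nonneg) auto
    then have "0 \<le> 4 * aa^2 * (- Q)" using id by simp
    moreover have p4: "4 * aa^2 > 0" using a2 by simp
    ultimately show ?thesis
    proof -
      assume h1: "0 \<le> 4 * aa^2 * (- Q)"
      show "Q \<le> 0"
      proof (rule ccontr)
        assume "\<not> Q \<le> 0"
        then have "- Q < 0" by simp
        from mult_pos_neg[OF p4 this] h1 show False by simp
      qed
    qed
  qed
  have Qlt: "Q < 0" if ze: "z \<noteq> 0 \<or> e \<noteq> 0"
  proof (rule ccontr)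
    assume "\<not> Q < 0"
    then have "Q = 0" using Qle by simp
    then have s: "(2 * aa^2 * z - aa * (1 - c * \<gamma>) * e)^2 + aa^2 * (4 * c * h - (1 + c * \<gamma>)^2) * e^2 = 0"
      using id by simp
    have t2: "aa^2 * (4 * c * h - (1 + c * \<gamma>)^2) * e^2 \<ge> 0" using pos a2 by simp
    have "aa^2 * (4 * c * h - (1 + c * \<gamma>)^2) * e^2 = 0"
      using s t2 by (smt (verit) zero_le_power2)
    then have e0: "e = 0" using pos a2 by simp
    then have "(2 * aa^2 * z)^2 = 0" using s by simp
    then have "z = 0" using a2 by simp
    then show False using ze e0 by simp
  qed
  define W where "W = (G - max (G - e + aa * z) 0) * (aa * z + c * \<gamma> * e) - c * h * e^2"
  have hpos: "h > 0"
  proof -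
    have "0 \<le> (1 + c * \<gamma>)^2" by simp
    then have "0 < 4 * c * h" using cond by linarith
    then show ?thesis using c by (simp add: zero_less_mult_iff)
  qed
  have main: "W \<le> 0 \<and> ((z \<noteq> 0 \<or> e \<noteq> 0) \<longrightarrow> W < 0)"
  proof (cases "G - e + aa * z \<ge> 0")
    case True
    then have "W = Q" unfolding W_def Q_def by (simp add: algebra_simps power2_eq_square)
    then show ?thesis using Qle Qlt by simp
  next
    case False
    then have u: "G - max (G - e + aa * z) 0 = G" by simp
    show ?thesis
    proof (cases "aa * z + c * \<gamma> * e \<ge> 0")
      case True
      have "G * (aa * z + c * \<gamma> * e) \<le> (e - aa * z) * (aa * z + c * \<gamma> * e)"
        using False True by (intro mult_right_mono) auto
      then have "W \<le> Q" unfolding W_def Q_def u by (simp add: algebra_simps power2_eq_square)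
      then show ?thesis using Qle Qlt by fastforce
    next
      case F2: False
      have A: "G * (aa * z + c * \<gamma> * e) \<le> 0" using G F2 by (simp add: mult_nonneg_nonpos)
      have B: "c * h * e^2 \<ge> 0" using c hpos by simp
      have "W \<le> 0" unfolding W_def u using A B by linarith
      moreover have "W < 0" if ze: "z \<noteq> 0 \<or> e \<noteq> 0"
      proof (cases "e = 0")
        case True
        then have "z \<noteq> 0" using ze by simp
        have "aa * z < 0" using F2 True by simp
        then have "z < 0" using a by (simp add: mult_less_0_iff)
        then have "G > 0" using Gz by simp
        then have "G * (aa * z + c * \<gamma> * e) < 0" using F2 by (simp add: mult_pos_neg)
        then show ?thesis unfolding W_def u using B by linarith
      next
        case False
        then have "c * h * e^2 > 0" using c hpos by simp
        then show ?thesis unfolding W_def u using A by linarith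
      qed
      ultimately show ?thesis by blast
    qed
  qed
  then show "(G - max (G - e + aa * z) 0) * (aa * z + c * \<gamma> * e) - c * h * e^2 \<le> 0"
    unfolding W_def by blast
  show "z \<noteq> 0 \<or> e \<noteq> 0 \<Longrightarrow> (G - max (G - e + aa * z) 0) * (aa * z + c * \<gamma> * e) - c * h * e^2 < 0"
    using main unfolding W_def by blast
qed

locale sys =
  fixes g :: "real \<Rightarrow> real" and J alpha h wrd w1 glo ghi c :: real
  assumes J: "J > 0" and alpha: "alpha > 0" and wrd: "0 < wrd" "wrd \<le> w1"
    and glo: "glo < 0" and ghi: "ghi > 0"
    and gder: "\<And>w. w > 0 \<Longrightarrow> (g has_real_derivative deriv g w) (at w)"
    and gb: "\<And>w. w > 0 \<Longrightarrow> glo \<le> deriv g w \<and> deriv g w \<le> ghi"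
    and gw1: "g w1 = 0" and gpos: "\<And>w. 0 < w \<Longrightarrow> w < w1 \<Longrightarrow> g w > 0"
    and c: "c > 0" and clo: "(1 + c * glo)^2 < 4 * c * h" and chi: "(1 + c * ghi)^2 < 4 * c * h"
begin

definition "F = cl_field J alpha h wrd g"
definition "D = {p :: real \<times> real. 0 < fst p \<and> fst p \<le> w1}"
definition "eq = (wrd, g wrd)"
definition "L = max (- glo) ghi"

lemma h_pos: "h > 0"
proof -
  have "0 \<le> (1 + c * ghi)^2" by simp
  then have "0 < 4 * c * h" using chi by linarith
  then show ?thesis using c by (simp add: zero_less_mult_iff)
qed

lemma w1_pos: "w1 > 0" using wrd by simp

lemma L_pos: "L > 0" using ghi by (simp add: L_def)

lemma g_mvt:
  assumes "0 < v" "v < w"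
  shows "\<exists>z. v < z \<and> z < w \<and> g w - g v = (w - v) * deriv g z"
proof -
  have cont: "continuous_on {v..w} g"
    using assms by (intro continuous_at_imp_continuous_on ballI DERIV_isCont[OF gder]) auto
  have dif: "g differentiable (at x)" if "v < x" "x < w" for x
    using gder[of x] that assms real_differentiable_def by fastforce
  from MVT[OF assms(2) cont dif] obtain l z where z: "v < z" "z < w" "DERIV g z :> l" "g w - g v = (w - v) * l"
    by blast
  have "l = deriv g z" using DERIV_unique[OF z(3) gder[of z]] z assms by simp
  then show ?thesis using z by blast
qed

lemma g_lip:
  assumes "0 < v" "0 < w"
  shows "\<bar>g w - g v\<bar> \<le> L * \<bar>w - v\<bar>"
proof -
  have *: "\<bar>g b - g a\<bar> \<le> L * \<bar>b - a\<bar>" if ab: "0 < a" "a < b" for a b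
  proof -
    obtain z where z: "a < z" "z < b" "g b - g a = (b - a) * deriv g z" using g_mvt[OF ab] by blast
    have "\<bar>deriv g z\<bar> \<le> L" using gb[of z] z ab by (auto simp: L_def)
    then have "\<bar>b - a\<bar> * \<bar>deriv g z\<bar> \<le> \<bar>b - a\<bar> * L" by (intro mult_left_mono) auto
    then show ?thesis using z(3) by (simp add: abs_mult mult.commute)
  qed
  consider "v < w" | "v = w" | "w < v" by linarith
  then show ?thesis
  proof cases
    case 1 then show ?thesis using *[of v w] assms by simp
  next
    case 2 then show ?thesis by simp
  next
    case 3 then show ?thesis using *[of w v] assms by (simp add: abs_minus_commute)
  qed
qed

lemma g_above:
  assumes "w1 \<le> w"
  shows "g w \<le> ghi * (w - w1)"
proof (cases "w = w1")
  case True then show ?thesis by (simp add: gw1)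
next
  case False
  then have "w1 < w" using assms by simp
  obtain z where z: "w1 < z" "z < w" "g w - g w1 = (w - w1) * deriv g z" using g_mvt[OF w1_pos \<open>w1 < w\<close>] by blast
  have "deriv g z \<le> ghi" using gb[of z] z w1_pos by simp
  then have "(w - w1) * deriv g z \<le> (w - w1) * ghi" using \<open>w1 < w\<close> by (intro mult_left_mono) auto
  then show ?thesis using z(3) gw1 by (simp add: mult.commute)
qed

lemma g_nonneg: "0 < w \<Longrightarrow> w \<le> w1 \<Longrightarrow> 0 \<le> g w"
  using gpos[of w] gw1 by (cases "w = w1") auto

lemma g_le: assumes "0 < w" "w \<le> w1" shows "g w \<le> L * w1"
proof -
  have "\<bar>g w1 - g w\<bar> \<le> L * \<bar>w1 - w\<bar>" using g_lip[OF assms(1) w1_pos] .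
  moreover have "L * \<bar>w1 - w\<bar> \<le> L * w1" using assms L_pos by (intro mult_left_mono) auto
  ultimately show ?thesis using gw1 by simp
qed

lemma g_cont: "continuous_on {0<..} g"
  by (intro continuous_at_imp_continuous_on ballI DERIV_isCont[OF gder]) auto

end

context sys begin

definition "Fc cc p = F (max (fst p) cc, snd p)"

definition "sol cc x S \<longleftrightarrow> is_interval S \<and> 0 \<in> S \<and> S \<subseteq> {0..} \<and>
   (\<forall>t\<in>S. 0 < max (fst (x t)) cc \<and> (x has_vector_derivative Fc cc (x t)) (at t within S))"

lemma F_fst: "fst (F p) = (g (fst p) - max (snd p + alpha * ln (fst p / wrd)) 0) / J"
  by (simp add: F_def cl_field_def Let_def)

lemma F_snd: "snd (F p) = h / J * (g (fst p) - snd p)"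
  by (simp add: F_def cl_field_def Let_def)

lemma Fc_fst: "fst (Fc cc p) = (g (max (fst p) cc) - max (snd p + alpha * ln (max (fst p) cc / wrd)) 0) / J"
  by (simp add: Fc_def F_fst)

lemma Fc_snd: "snd (Fc cc p) = h / J * (g (max (fst p) cc) - snd p)"
  by (simp add: Fc_def F_snd)

lemma Fc0: "0 < fst p \<Longrightarrow> Fc 0 p = F p"
  by (simp add: Fc_def)

lemma sol_of_is_solution: "is_solution F x S \<Longrightarrow> sol 0 x S"
  unfolding is_solution_def sol_def by (auto simp: Fc0)

lemma sol_basic:
  assumes "sol cc x S" "t \<in> S"
  shows "{0..t} \<subseteq> S" "0 \<le> t" "continuous_on {0..t} (\<lambda>s. fst (x s))" "continuous_on {0..t} (\<lambda>s. snd (x s))"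
    "\<And>s. 0 < s \<Longrightarrow> s < t \<Longrightarrow> ((\<lambda>s. fst (x s)) has_real_derivative fst (Fc cc (x s))) (at s)"
    "\<And>s. 0 < s \<Longrightarrow> s < t \<Longrightarrow> ((\<lambda>s. snd (x s)) has_real_derivative snd (Fc cc (x s))) (at s)"
    "continuous_on {0..t} x"
proof -
  have iv: "is_interval S" and z: "0 \<in> S" and sub: "S \<subseteq> {0..}"
    and d: "\<And>t. t \<in> S \<Longrightarrow> (x has_vector_derivative Fc cc (x t)) (at t within S)"
    using assms(1) by (auto simp: sol_def)
  show sS: "{0..t} \<subseteq> S" by (rule interval_sub[OF iv z assms(2)])
  show "0 \<le> t" using sub assms(2) by auto
  have cx: "continuous_on S x" by (rule cont_sol[OF d])
  show cxt: "continuous_on {0..t} x" using continuous_on_subset[OF cx sS] .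
  show "continuous_on {0..t} (\<lambda>s. fst (x s))" using continuous_on_fst[OF cxt] .
  show "continuous_on {0..t} (\<lambda>s. snd (x s))" using continuous_on_snd[OF cxt] .
  fix s assume s: "0 < s" "s < t"
  have "s \<in> S" using s sS by auto
  have ds: "(x has_vector_derivative Fc cc (x s)) (at s)"
    by (rule deriv_interior[OF iv z assms(2) s d[OF \<open>s \<in> S\<close>]])
  show "((\<lambda>s. fst (x s)) has_real_derivative fst (Fc cc (x s))) (at s)" using vd_fst[OF ds] .
  show "((\<lambda>s. snd (x s)) has_real_derivative snd (Fc cc (x s))) (at s)" using vd_snd[OF ds] .
qed

lemma sol_pos: "sol cc x S \<Longrightarrow> t \<in> S \<Longrightarrow> 0 < max (fst (x t)) cc"
  by (auto simp: sol_def)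

lemma B1:
  assumes sol: "sol cc x S" and cc: "cc \<le> w1" and x0: "fst (x 0) \<le> w1" and t: "t \<in> S"
  shows "fst (x t) \<le> w1"
proof (rule cross[where f = "\<lambda>s. fst (x s)" and f' = "\<lambda>s. fst (Fc cc (x s))" and k = "ghi / J"])
  show "0 \<le> t" "continuous_on {0..t} (\<lambda>s. fst (x s))" using sol_basic[OF sol t] by auto
  show "fst (x 0) \<le> w1" by (rule x0)
  fix s assume s: "0 < s" "s < t" "w1 < fst (x s)"
  show "((\<lambda>s. fst (x s)) has_real_derivative fst (Fc cc (x s))) (at s) \<and> fst (Fc cc (x s)) \<le> ghi / J * (fst (x s) - w1)"
  proof
    show "((\<lambda>s. fst (x s)) has_real_derivative fst (Fc cc (x s))) (at s)" using sol_basic(5)[OF sol t s(1,2)] .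
    have m: "max (fst (x s)) cc = fst (x s)" using s cc by simp
    have "fst (Fc cc (x s)) \<le> g (fst (x s)) / J"
      unfolding Fc_fst m using J by (intro divide_right_mono) auto
    also have "\<dots> \<le> ghi * (fst (x s) - w1) / J" using g_above[of "fst (x s)"] s J by (intro divide_right_mono) auto
    finally show "fst (Fc cc (x s)) \<le> ghi / J * (fst (x s) - w1)" by simp
  qed
qed

lemma B2:
  assumes sol: "sol cc x S" and cc: "cc \<le> w1" and x0: "fst (x 0) \<le> w1" and Mx: "L * w1 \<le> Mx"
    and y0: "snd (x 0) \<le> Mx" and t: "t \<in> S"
  shows "snd (x t) \<le> Mx"
proof (rule cross[where f = "\<lambda>s. snd (x s)" and f' = "\<lambda>s. snd (Fc cc (x s))" and k = 0])
  show "0 \<le> t" "continuous_on {0..t} (\<lambda>s. snd (x s))" using sol_basic[OF sol t] by auto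
  show "snd (x 0) \<le> Mx" by (rule y0)
  fix s assume s: "0 < s" "s < t" "Mx < snd (x s)"
  show "((\<lambda>s. snd (x s)) has_real_derivative snd (Fc cc (x s))) (at s) \<and> snd (Fc cc (x s)) \<le> 0 * (snd (x s) - Mx)"
  proof
    show "((\<lambda>s. snd (x s)) has_real_derivative snd (Fc cc (x s))) (at s)" using sol_basic(6)[OF sol t s(1,2)] .
    have sS: "s \<in> S" using sol_basic(1)[OF sol t] s by auto
    have w: "fst (x s) \<le> w1" using B1[OF sol cc x0 sS] .
    have p: "0 < max (fst (x s)) cc" using sol_pos[OF sol sS] .
    have "g (max (fst (x s)) cc) \<le> L * w1" using g_le[OF p] w cc by simp
    then have "g (max (fst (x s)) cc) - snd (x s) \<le> 0" using Mx s by simp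
    then have "h * (g (max (fst (x s)) cc) - snd (x s)) \<le> 0" using h_pos by (intro mult_nonneg_nonpos) auto
    then have "h * (g (max (fst (x s)) cc) - snd (x s)) / J \<le> 0" using J by (intro divide_nonpos_pos) auto
    then show "snd (Fc cc (x s)) \<le> 0 * (snd (x s) - Mx)"
      unfolding Fc_snd by simp
  qed
qed

lemma B3:
  assumes sol: "sol cc x S" and cc: "cc \<le> w1" and x0: "fst (x 0) \<le> w1" and m0: "m0 \<le> 0"
    and y0: "m0 \<le> snd (x 0)" and t: "t \<in> S"
  shows "m0 \<le> snd (x t)"
proof -
  have "- snd (x t) \<le> - m0"
  proof (rule cross[where f = "\<lambda>s. - snd (x s)" and f' = "\<lambda>s. - snd (Fc cc (x s))" and k = 0])
    show "0 \<le> t" using sol_basic[OF sol t] by auto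
    show "continuous_on {0..t} (\<lambda>s. - snd (x s))" using continuous_on_minus[OF sol_basic(4)[OF sol t]] .
    show "- snd (x 0) \<le> - m0" using y0 by simp
    fix s assume s: "0 < s" "s < t" "- m0 < - snd (x s)"
    show "((\<lambda>s. - snd (x s)) has_real_derivative - snd (Fc cc (x s))) (at s) \<and> - snd (Fc cc (x s)) \<le> 0 * (- snd (x s) - - m0)"
    proof
      show "((\<lambda>s. - snd (x s)) has_real_derivative - snd (Fc cc (x s))) (at s)"
        using DERIV_minus[OF sol_basic(6)[OF sol t s(1,2)]] .
      have sS: "s \<in> S" using sol_basic(1)[OF sol t] s by auto
      have w: "fst (x s) \<le> w1" using B1[OF sol cc x0 sS] .
      have p: "0 < max (fst (x s)) cc" using sol_pos[OF sol sS] .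
      have "0 \<le> g (max (fst (x s)) cc)" using g_nonneg[OF p] w cc by simp
      then have "0 \<le> g (max (fst (x s)) cc) - snd (x s)" using m0 s by simp
      then show "- snd (Fc cc (x s)) \<le> 0 * (- snd (x s) - - m0)"
        unfolding Fc_snd using h_pos J by simp
    qed
  qed
  then show ?thesis by simp
qed

lemma B4:
  assumes sol: "sol cc x S" and cc: "cc < wl" and x0: "fst (x 0) \<le> w1"
    and ub: "\<And>s. s \<in> S \<Longrightarrow> snd (x s) \<le> Mx" and wl: "0 < wl" "wl \<le> fst (x 0)" "wl \<le> wrd * exp (- Mx / alpha)"
    and t: "t \<in> S"
  shows "wl \<le> fst (x t)"
proof -
  have "- fst (x t) \<le> - wl"
  proof (rule cross[where f = "\<lambda>s. - fst (x s)" and f' = "\<lambda>s. - fst (Fc cc (x s))" and k = 0])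
    show "0 \<le> t" using sol_basic[OF sol t] by auto
    show "continuous_on {0..t} (\<lambda>s. - fst (x s))" using continuous_on_minus[OF sol_basic(3)[OF sol t]] .
    show "- fst (x 0) \<le> - wl" using wl by simp
    fix s assume s: "0 < s" "s < t" "- wl < - fst (x s)"
    show "((\<lambda>s. - fst (x s)) has_real_derivative - fst (Fc cc (x s))) (at s) \<and> - fst (Fc cc (x s)) \<le> 0 * (- fst (x s) - - wl)"
    proof
      show "((\<lambda>s. - fst (x s)) has_real_derivative - fst (Fc cc (x s))) (at s)"
        using DERIV_minus[OF sol_basic(5)[OF sol t s(1,2)]] .
      have sS: "s \<in> S" using sol_basic(1)[OF sol t] s by auto
      define m where "m = max (fst (x s)) cc"
      have p: "0 < m" using sol_pos[OF sol sS] by (simp add: m_def)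
      have mwl: "m < wl" using s cc by (simp add: m_def)
      have mw1: "m \<le> w1" using mwl wl x0 by simp
      have "ln (m / wrd) < ln (wl / wrd)" using p mwl wrd wl by (simp add: divide_strict_right_mono)
      also have "ln (wl / wrd) \<le> ln (exp (- Mx / alpha))"
        using wl wrd by (subst ln_le_cancel_iff) (auto simp: field_simps)
      also have "\<dots> = - Mx / alpha" by simp
      finally have "alpha * ln (m / wrd) < alpha * (- Mx / alpha)" using alpha by (intro mult_strict_left_mono)
      then have "alpha * ln (m / wrd) < - Mx" using alpha by simp
      then have "snd (x s) + alpha * ln (m / wrd) < 0" using ub[OF sS] by simp
      then have "fst (Fc cc (x s)) = g m / J" unfolding Fc_fst m_def[symmetric] by simp
      moreover have "0 \<le> g m" using g_nonneg[OF p mw1] .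
      ultimately show "- fst (Fc cc (x s)) \<le> 0 * (- fst (x s) - - wl)" using J by simp
    qed
  qed
  then show ?thesis by simp
qed

end

context sys begin

definition "P w = alpha * (w * (ln w - ln wrd) - w + wrd)"
definition "V p = P (fst p) + c / 2 * (g (fst p) - snd p)^2"
definition "Wg \<gamma> p = ((g (fst p) - max (snd p + alpha * ln (fst p / wrd)) 0) *
    (alpha * ln (fst p / wrd) + c * \<gamma> * (g (fst p) - snd p)) - c * h * (g (fst p) - snd p)^2) / J"
definition "Wt p = max (Wg glo p) (Wg ghi p)"

lemma P_deriv:
  assumes w: "0 < w"
  shows "(P has_real_derivative alpha * ln (w / wrd)) (at w)"
proof -
  have d1: "((\<lambda>w. w * (ln w - ln wrd)) has_real_derivative 1 * (ln w - ln wrd) + (1 / w - 0) * w) (at w)"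
    by (rule DERIV_mult[OF DERIV_ident DERIV_diff[OF DERIV_ln_divide[OF w] DERIV_const]])
  have d2: "((\<lambda>w. w * (ln w - ln wrd) - w + wrd) has_real_derivative (1 * (ln w - ln wrd) + (1 / w - 0) * w) - 1 + 0) (at w)"
    by (rule DERIV_add[OF DERIV_diff[OF d1 DERIV_ident] DERIV_const])
  have d3: "(P has_real_derivative alpha * ((1 * (ln w - ln wrd) + (1 / w - 0) * w) - 1 + 0)) (at w)"
    unfolding P_def[abs_def] by (rule DERIV_cmult[OF d2])
  have E: "alpha * ((1 * (ln w - ln wrd) + (1 / w - 0) * w) - 1 + 0) = alpha * ln (w / wrd)"
    using w wrd by (simp add: ln_div)
  from DERIV_cong[OF d3 E] show ?thesis .
qed

lemma P_nonneg:
  assumes w: "0 < w"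
  shows "0 \<le> P w" and "w \<noteq> wrd \<Longrightarrow> 0 < P w"
proof -
  define y where "y = wrd / w"
  have y: "0 < y" using w wrd by (simp add: y_def)
  have ly: "ln y = - (ln w - ln wrd)" using w wrd by (simp add: y_def ln_div)
  have le: "ln y \<le> y - 1" using ln_le_minus_one[OF y] .
  have k1: "w * ((y - 1) - ln y) = w * (y - 1) + w * (ln w - ln wrd)" by (simp add: ly algebra_simps)
  have k2: "w * (y - 1) = wrd - w" using w by (simp add: y_def field_simps)
  have key: "w * (ln w - ln wrd) - w + wrd = w * ((y - 1) - ln y)"
    unfolding k1 k2 by simp
  have "0 \<le> w * ((y - 1) - ln y)" using w le by simp
  then show "0 \<le> P w" using alpha unfolding P_def key by simp
  assume ne: "w \<noteq> wrd"
  have "ln y \<noteq> y - 1"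
  proof
    assume "ln y = y - 1"
    then have "y = 1" using ln_eq_minus_one[OF y] by simp
    then show False using ne w by (simp add: y_def)
  qed
  then have "0 < w * ((y - 1) - ln y)" using w le by simp
  then show "0 < P w" using alpha unfolding P_def key by simp
qed

lemma P_wrd: "P wrd = 0" by (simp add: P_def)

lemma V_nonneg: "0 < fst p \<Longrightarrow> 0 \<le> V p"
  unfolding V_def using P_nonneg(1)[of "fst p"] c by simp

lemma V_pos: assumes "0 < fst p" "p \<noteq> eq" shows "0 < V p"
proof (cases "fst p = wrd")
  case True
  then have "snd p \<noteq> g wrd" using assms(2) by (cases p) (auto simp: eq_def)
  then have "0 < c / 2 * (g (fst p) - snd p)^2" using c True by simp
  then show ?thesis unfolding V_def using P_nonneg(1)[OF assms(1)] by simp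
next
  case False
  then show ?thesis unfolding V_def using P_nonneg(2)[OF assms(1)] c by (simp add: add_pos_nonneg)
qed

lemma V_eq: "V eq = 0" by (simp add: V_def eq_def P_wrd)

lemma cont_g_fst: "continuous_on {p :: real \<times> real. 0 < fst p} (\<lambda>p. g (fst p))"
  by (rule continuous_on_compose2[OF g_cont continuous_on_fst[OF continuous_on_id]]) auto

lemma cont_ln_fst: "continuous_on {p :: real \<times> real. 0 < fst p} (\<lambda>p. ln (fst p / wrd))"
  using wrd by (intro continuous_intros) auto

lemma cont_ln_fst': "continuous_on {p :: real \<times> real. 0 < fst p} (\<lambda>p. ln (fst p))"
  by (intro continuous_intros) auto

lemma V_cont: "continuous_on {p. 0 < fst p} V"
  unfolding V_def[abs_def] P_def
  using cont_g_fst cont_ln_fst' by (intro continuous_intros) (use wrd J in auto)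

lemma Wg_cont: "continuous_on {p. 0 < fst p} (Wg \<gamma>)"
  unfolding Wg_def[abs_def]
  using cont_g_fst cont_ln_fst by (intro continuous_intros) (use wrd J in auto)

lemma Wt_cont: "continuous_on {p. 0 < fst p} Wt"
  unfolding Wt_def[abs_def] using Wg_cont by (intro continuous_on_max)

lemma Wg_alg: "Wg \<gamma> p = ((g (fst p) - max (g (fst p) - (g (fst p) - snd p) + alpha * ln (fst p / wrd)) 0) *
    (alpha * ln (fst p / wrd) + c * \<gamma> * (g (fst p) - snd p)) - c * h * (g (fst p) - snd p)^2) / J"
  by (simp add: Wg_def)

lemma Wg_le_Wt:
  assumes "glo \<le> \<gamma>" "\<gamma> \<le> ghi"
  shows "Wg \<gamma> p \<le> Wt p"
proof -
  define u where "u = g (fst p) - max (snd p + alpha * ln (fst p / wrd)) 0"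
  define e where "e = g (fst p) - snd p"
  have lin: "Wg \<gamma>' p = (u * (alpha * ln (fst p / wrd)) - c * h * e^2) / J + \<gamma>' * (u * c * e / J)" for \<gamma>'
    unfolding Wg_def u_def[symmetric] e_def[symmetric] using J by (simp add: field_simps)
  show ?thesis
  proof (cases "u * c * e / J \<ge> 0")
    case True
    then have "\<gamma> * (u * c * e / J) \<le> ghi * (u * c * e / J)" using assms by (intro mult_right_mono) auto
    then have "Wg \<gamma> p \<le> Wg ghi p" unfolding lin by simp
    then show ?thesis unfolding Wt_def by simp
  next
    case False
    then have "\<gamma> * (u * c * e / J) \<le> glo * (u * c * e / J)" using assms by (intro mult_right_mono_neg) auto
    then have "Wg \<gamma> p \<le> Wg glo p" unfolding lin by simp
    then show ?thesis unfolding Wt_def by simp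
  qed
qed

lemma Wg_D:
  assumes p: "p \<in> D" and cond: "(1 + c * \<gamma>)^2 < 4 * c * h"
  shows "Wg \<gamma> p \<le> 0" and "p \<noteq> eq \<Longrightarrow> Wg \<gamma> p < 0"
proof -
  define G where "G = g (fst p)"
  define z where "z = ln (fst p / wrd)"
  define e where "e = g (fst p) - snd p"
  have w: "0 < fst p" "fst p \<le> w1" using p by (auto simp: D_def)
  have G: "0 \<le> G" using g_nonneg[OF w] by (simp add: G_def)
  have Gz: "z < 0 \<longrightarrow> 0 < G"
  proof
    assume "z < 0"
    then have "fst p / wrd < 1" using w wrd by (simp add: z_def)
    then have "fst p < wrd" using wrd by (simp add: divide_less_eq)
    then show "0 < G" using gpos[of "fst p"] w wrd by (simp add: G_def)
  qed
  have eqW: "Wg \<gamma> p = ((G - max (G - e + alpha * z) 0) * (alpha * z + c * \<gamma> * e) - c * h * e^2) / J"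
    by (simp add: Wg_def G_def z_def e_def)
  note k = key_alg[OF alpha c cond G Gz, of e]
  show "Wg \<gamma> p \<le> 0" unfolding eqW using k(1) J by (simp add: divide_nonpos_pos)
  assume ne: "p \<noteq> eq"
  have "z \<noteq> 0 \<or> e \<noteq> 0"
  proof (rule ccontr)
    assume "\<not> (z \<noteq> 0 \<or> e \<noteq> 0)"
    then have z0: "z = 0" and e0: "e = 0" by auto
    have "fst p / wrd = 1" using z0 w wrd by (simp add: z_def)
    then have "fst p = wrd" using wrd by simp
    moreover then have "snd p = g wrd" using e0 by (simp add: e_def)
    ultimately show False using ne by (cases p) (simp add: eq_def)
  qed
  then show "Wg \<gamma> p < 0" unfolding eqW using k(2) J by (simp add: divide_neg_pos)
qed

lemma Wt_D: assumes "p \<in> D" shows "Wt p \<le> 0" and "p \<noteq> eq \<Longrightarrow> Wt p < 0"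
  using Wg_D[OF assms clo] Wg_D[OF assms chi] by (auto simp: Wt_def)

end

context sys begin

lemma inv:
  assumes sol: "is_solution F x S" and x0: "x 0 \<in> D" and t: "t \<in> S"
  shows "x t \<in> D"
proof -
  have "fst (x t) \<le> w1" using B1[OF sol_of_is_solution[OF sol] _ _ t] x0 w1_pos by (auto simp: D_def)
  moreover have "0 < fst (x t)" using sol t by (auto simp: is_solution_def)
  ultimately show ?thesis by (simp add: D_def)
qed

lemma V_deriv:
  assumes sol: "is_solution F x S" and t: "t \<in> S" and s: "0 < s" "s < t" and xs: "x s \<in> D"
  shows "((\<lambda>r. V (x r)) has_real_derivative Wg (deriv g (fst (x s))) (x s)) (at s)"
proof -
  define W where "W = fst (x s)"
  define Y where "Y = snd (x s)"
  have Wp: "0 < W" using xs by (simp add: D_def W_def)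
  have FF: "Fc 0 (x s) = F (x s)" using Wp by (simp add: Fc0 W_def)
  have dw: "((\<lambda>r. fst (x r)) has_real_derivative fst (F (x s))) (at s)"
    using sol_basic(5)[OF sol_of_is_solution[OF sol] t s] FF by simp
  have dy: "((\<lambda>r. snd (x r)) has_real_derivative snd (F (x s))) (at s)"
    using sol_basic(6)[OF sol_of_is_solution[OF sol] t s] FF by simp
  define w' where "w' = fst (F (x s))"
  define y' where "y' = snd (F (x s))"
  define \<gamma> where "\<gamma> = deriv g W"
  have dP: "((\<lambda>r. P (fst (x r))) has_real_derivative alpha * ln (W / wrd) * w') (at s)"
    unfolding W_def w'_def by (rule DERIV_chain2[OF P_deriv dw]) (use Wp W_def in simp)
  have dg: "((\<lambda>r. g (fst (x r))) has_real_derivative \<gamma> * w') (at s)"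
    unfolding \<gamma>_def W_def w'_def by (rule DERIV_chain2[OF gder dw]) (use Wp W_def in simp)
  have de: "((\<lambda>r. g (fst (x r)) - snd (x r)) has_real_derivative \<gamma> * w' - y') (at s)"
    unfolding y'_def by (rule DERIV_diff[OF dg dy])
  have dsq: "((\<lambda>r. (g (fst (x r)) - snd (x r))^2) has_real_derivative of_nat 2 * ((\<gamma> * w' - y') * (g (fst (x s)) - snd (x s)) ^ (2 - Suc 0))) (at s)"
    by (rule DERIV_power[OF de])
  have dV: "((\<lambda>r. V (x r)) has_real_derivative alpha * ln (W / wrd) * w' + c / 2 * (of_nat 2 * ((\<gamma> * w' - y') * (g (fst (x s)) - snd (x s)) ^ (2 - Suc 0)))) (at s)"
    unfolding V_def by (rule DERIV_add[OF dP DERIV_cmult[OF dsq]])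
  have E: "alpha * ln (W / wrd) * w' + c / 2 * (of_nat 2 * ((\<gamma> * w' - y') * (g (fst (x s)) - snd (x s)) ^ (2 - Suc 0)))
       = Wg \<gamma> (x s)"
    unfolding Wg_def w'_def y'_def F_fst F_snd W_def[symmetric] Y_def[symmetric]
    using J by (simp add: field_simps power2_eq_square)
  show ?thesis using DERIV_cong[OF dV E] by (simp add: \<gamma>_def W_def)
qed

lemma V_decr:
  assumes sol: "is_solution F x S" and x0: "x 0 \<in> D" and sS: "s \<in> S" and tS: "t \<in> S" and st: "s \<le> t"
    and m: "0 \<le> m" and bnd: "\<And>r. s < r \<Longrightarrow> r < t \<Longrightarrow> Wt (x r) \<le> - m"
  shows "V (x t) \<le> V (x s) - m * (t - s)"
proof -
  have iv: "is_interval S" and sub: "S \<subseteq> {0..}"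
    and d: "\<And>t. t \<in> S \<Longrightarrow> (x has_vector_derivative F (x t)) (at t within S)"
    using sol by (auto simp: is_solution_def)
  have stS: "{s..t} \<subseteq> S" by (rule interval_sub[OF iv sS tS])
  have cx: "continuous_on {s..t} x" using continuous_on_subset[OF cont_sol[OF d] stS] .
  have img: "x ` {s..t} \<subseteq> {p. 0 < fst p}" using sol stS by (auto simp: is_solution_def)
  have cV: "continuous_on {s..t} (\<lambda>r. V (x r) + m * r)"
    using continuous_on_compose2[OF V_cont cx img] by (intro continuous_intros) auto
  have "V (x t) + m * t \<le> V (x s) + m * s"
  proof (rule mono_deriv[OF st cV])
    fix r assume r: "s < r" "r < t"
    have rS: "r \<in> S" using r stS by auto
    have xr: "x r \<in> D" by (rule inv[OF sol x0 rS])
    have r0: "0 < r" using r sS sub by auto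
    have dV: "((\<lambda>r. V (x r)) has_real_derivative Wg (deriv g (fst (x r))) (x r)) (at r)"
      by (rule V_deriv[OF sol tS r0 r(2) xr])
    have "Wg (deriv g (fst (x r))) (x r) \<le> Wt (x r)"
      using gb[of "fst (x r)"] xr by (intro Wg_le_Wt) (auto simp: D_def)
    then have le: "Wg (deriv g (fst (x r))) (x r) + m \<le> 0" using bnd[OF r] by simp
    show "((\<lambda>r. V (x r) + m * r) has_real_derivative Wg (deriv g (fst (x r))) (x r) + m) (at r) \<and> Wg (deriv g (fst (x r))) (x r) + m \<le> 0"
      using DERIV_add[OF dV DERIV_cong[OF DERIV_cmult[OF DERIV_ident] mult_1_right]] le by simp
  qed
  then show ?thesis by (simp add: algebra_simps)
qed

lemma V_mono:
  assumes sol: "is_solution F x S" and x0: "x 0 \<in> D" and sS: "s \<in> S" and tS: "t \<in> S" and st: "s \<le> t"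
  shows "V (x t) \<le> V (x s)"
proof -
  have "V (x t) \<le> V (x s) - 0 * (t - s)"
  proof (rule V_decr[OF sol x0 sS tS st])
    fix r assume r: "s < r" "r < t"
    have iv: "is_interval S" using sol by (simp add: is_solution_def)
    have "r \<in> S" using r interval_sub[OF iv sS tS] by auto
    then show "Wt (x r) \<le> - 0" using Wt_D(1)[OF inv[OF sol x0]] by simp
  qed simp
  then show ?thesis by simp
qed

end

context sys begin

lemma cU_fst: "continuous_on UNIV (fst :: real \<times> real \<Rightarrow> real)"
  by (intro continuous_intros)
lemma cU_snd: "continuous_on UNIV (snd :: real \<times> real \<Rightarrow> real)"
  by (intro continuous_intros)
lemma cU_dist: "continuous_on UNIV (\<lambda>q :: real \<times> real. dist q eq)"
  by (intro continuous_intros)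

lemma open_pos: "open {p :: real \<times> real. 0 < fst p}"
  using open_Collect_less[OF continuous_on_const cU_fst, of 0] by simp

lemma stab:
  assumes e: "\<epsilon> > 0"
  shows "\<exists>\<delta>>0. \<forall>x S t1. is_solution F x S \<and> x 0 \<in> D \<and> t1 \<in> S \<and> dist (x t1) eq < \<delta>
           \<longrightarrow> (\<forall>t\<in>S. t1 \<le> t \<longrightarrow> dist (x t) eq < \<epsilon>)"
proof -
  define r where "r = min \<epsilon> (wrd / 2)"
  have r: "0 < r" "r \<le> \<epsilon>" "r \<le> wrd / 2" using e wrd by (auto simp: r_def)
  define Kr where "Kr = {q :: real \<times> real. dist q eq = r \<and> fst q \<le> w1}"
  have clK: "closed Kr" unfolding Kr_def
    by (intro closed_Collect_conj closed_Collect_eq closed_Collect_le cU_dist cU_fst continuous_on_const)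
  have bK: "bounded Kr" by (rule bounded_subset[OF bounded_cball[of eq r]]) (auto simp: Kr_def dist_commute)
  have cK: "compact Kr" using clK bK by (simp add: compact_eq_bounded_closed)
  have Kpos: "0 < fst q" if "q \<in> Kr" for q
  proof -
    have "dist (fst q) (fst eq) \<le> dist q eq" by (rule dist_fst_le)
    then have "\<bar>fst q - wrd\<bar> \<le> r" using that by (simp add: Kr_def eq_def dist_real_def)
    then show ?thesis using r wrd by linarith
  qed
  have q0: "(wrd, g wrd + r) \<in> Kr" using r wrd by (simp add: Kr_def eq_def dist_norm)
  have cVK: "continuous_on Kr V" by (rule continuous_on_subset[OF V_cont]) (use Kpos in auto)
  obtain q1 where q1: "q1 \<in> Kr" "\<And>q. q \<in> Kr \<Longrightarrow> V q1 \<le> V q"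
    using continuous_attains_inf[OF cK _ cVK] q0 by blast
  define m where "m = V q1"
  have mpos: "0 < m" unfolding m_def
  proof (rule V_pos[OF Kpos[OF q1(1)]])
    show "q1 \<noteq> eq" using q1(1) r by (auto simp: Kr_def)
  qed
  have eqpos: "eq \<in> {p. 0 < fst p}" using wrd by (simp add: eq_def)
  have "isCont V eq" using V_cont open_pos eqpos continuous_on_eq_continuous_at by blast
  then obtain \<delta>0 where d0: "\<delta>0 > 0" "\<And>q. dist q eq < \<delta>0 \<Longrightarrow> dist (V q) (V eq) < m"
    using mpos unfolding continuous_at_eps_delta by blast
  define \<delta> where "\<delta> = min \<delta>0 r"
  have dpos: "\<delta> > 0" using d0 r by (simp add: \<delta>_def)
  show ?thesis
  proof (intro exI[of _ \<delta>] conjI dpos allI impI ballI)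
    fix x S t1 t
    assume A: "is_solution F x S \<and> x 0 \<in> D \<and> t1 \<in> S \<and> dist (x t1) eq < \<delta>" and tS: "t \<in> S" and tt: "t1 \<le> t"
    then have sol: "is_solution F x S" and x0: "x 0 \<in> D" and t1S: "t1 \<in> S" and dt1: "dist (x t1) eq < \<delta>"
      by auto
    have iv: "is_interval S" and d: "\<And>t. t \<in> S \<Longrightarrow> (x has_vector_derivative F (x t)) (at t within S)"
      using sol by (auto simp: is_solution_def)
    have Vt1: "V (x t1) < m"
    proof -
      have "dist (V (x t1)) (V eq) < m" using d0(2)[of "x t1"] dt1 by (simp add: \<delta>_def)
      then show ?thesis using V_eq by (simp add: dist_real_def)
    qed
    show "dist (x t) eq < \<epsilon>"
    proof (rule ccontr)
      assume "\<not> dist (x t) eq < \<epsilon>"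
      then have ge: "r \<le> dist (x t) eq" using r by simp
      have sub: "{t1..t} \<subseteq> S" by (rule interval_sub[OF iv t1S tS])
      have cx: "continuous_on {t1..t} (\<lambda>s. dist (x s) eq)"
        using continuous_on_subset[OF cont_sol[OF d] sub] by (intro continuous_intros)
      have le1: "dist (x t1) eq \<le> r" using dt1 by (simp add: \<delta>_def)
      obtain s where s: "t1 \<le> s" "s \<le> t" "dist (x s) eq = r"
        using IVT'[of "\<lambda>s. dist (x s) eq", OF le1 ge tt cx] by blast
      have sS: "s \<in> S" using s sub by auto
      have "x s \<in> D" by (rule inv[OF sol x0 sS])
      then have "x s \<in> Kr" using s by (simp add: Kr_def D_def)
      then have "m \<le> V (x s)" using q1(2) by (simp add: m_def)
      moreover have "V (x s) \<le> V (x t1)" by (rule V_mono[OF sol x0 t1S sS s(1)])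
      ultimately show False using Vt1 by simp
    qed
  qed
qed

lemma conv:
  assumes sol: "is_solution F x {0..}" and x0: "x 0 \<in> D"
  shows "(x \<longlongrightarrow> eq) at_top"
proof -
  have sol0: "sol 0 x {0..}" by (rule sol_of_is_solution[OF sol])
  define Mx where "Mx = max (snd (x 0)) (L * w1)"
  define m0 where "m0 = min (snd (x 0)) 0"
  define wl where "wl = min (fst (x 0)) (wrd * exp (- Mx / alpha))"
  have x0w: "0 < fst (x 0)" "fst (x 0) \<le> w1" using x0 by (auto simp: D_def)
  have wlpos: "0 < wl" using x0w wrd by (simp add: wl_def)
  have ub1: "fst (x t) \<le> w1" if "t \<ge> 0" for t using inv[OF sol x0, of t] that by (simp add: D_def)
  have ub2: "snd (x t) \<le> Mx" if "t \<in> {0..}" for t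
    by (rule B2[OF sol0 _ x0w(2) _ _ that]) (use w1_pos in \<open>auto simp: Mx_def\<close>)
  have lb2: "m0 \<le> snd (x t)" if "t \<ge> 0" for t
    by (rule B3[OF sol0 _ x0w(2) _ _]) (use w1_pos that in \<open>auto simp: m0_def\<close>)
  have lb1: "wl \<le> fst (x t)" if "t \<ge> 0" for t
    by (rule B4[OF sol0 wlpos x0w(2) ub2 wlpos]) (use that in \<open>auto simp: wl_def\<close>)
  show ?thesis
  proof (rule tendstoI)
    fix \<epsilon> :: real assume e: "\<epsilon> > 0"
    obtain \<delta> where dpos: "\<delta> > 0" and dst: "\<And>x S t1. is_solution F x S \<and> x 0 \<in> D \<and> t1 \<in> S \<and> dist (x t1) eq < \<delta>
           \<Longrightarrow> (\<forall>t\<in>S. t1 \<le> t \<longrightarrow> dist (x t) eq < \<epsilon>)"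
      using stab[OF e] by blast
    have "\<exists>t1\<ge>0. dist (x t1) eq < \<delta>"
    proof (rule ccontr)
      assume "\<not> (\<exists>t1\<ge>0. dist (x t1) eq < \<delta>)"
      then have far: "\<delta> \<le> dist (x t) eq" if "t \<ge> 0" for t using that by force
      define Kc where "Kc = {q :: real \<times> real. wl \<le> fst q \<and> fst q \<le> w1 \<and> m0 \<le> snd q \<and> snd q \<le> Mx \<and> \<delta> \<le> dist q eq}"
      have clK: "closed Kc" unfolding Kc_def
        by (intro closed_Collect_conj closed_Collect_le cU_dist cU_fst cU_snd continuous_on_const)
      have bK: "bounded Kc" unfolding bounded_iff
      proof (intro exI ballI)
        fix q assume q: "q \<in> Kc"
        have "norm q \<le> norm (fst q) + norm (snd q)" using norm_Pair_le[of "fst q" "snd q"] by simp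
        also have "\<dots> \<le> (\<bar>wl\<bar> + \<bar>w1\<bar>) + (\<bar>m0\<bar> + \<bar>Mx\<bar>)" using q by (intro add_mono) (auto simp: Kc_def)
        finally show "norm q \<le> (\<bar>wl\<bar> + \<bar>w1\<bar>) + (\<bar>m0\<bar> + \<bar>Mx\<bar>)" .
      qed
      have cK: "compact Kc" using clK bK by (simp add: compact_eq_bounded_closed)
      have inK: "x t \<in> Kc" if "t \<ge> 0" for t
        using ub1[OF that] ub2[of t] lb1[OF that] lb2[OF that] far[OF that] that by (simp add: Kc_def)
      have KD: "q \<in> D" "q \<noteq> eq" if "q \<in> Kc" for q
        using that wlpos dpos by (auto simp: Kc_def D_def)
      have cW: "continuous_on Kc Wt" by (rule continuous_on_subset[OF Wt_cont]) (use KD in \<open>auto simp: D_def\<close>)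
      obtain q2 where q2: "q2 \<in> Kc" "\<And>q. q \<in> Kc \<Longrightarrow> Wt q \<le> Wt q2"
        using continuous_attains_sup[OF cK _ cW] inK[of 0] by blast
      define mm where "mm = - Wt q2"
      have mm: "0 < mm" using Wt_D(2)[OF KD(1)[OF q2(1)] KD(2)[OF q2(1)]] by (simp add: mm_def)
      define T where "T = V (x 0) / mm + 1"
      have V0: "0 \<le> V (x 0)" using V_nonneg x0w by simp
      have T: "0 \<le> T" using V0 mm by (simp add: T_def)
      have "V (x T) \<le> V (x 0) - mm * (T - 0)"
      proof (rule V_decr[OF sol x0 _ _ T])
        show "0 \<in> {0::real..}" "T \<in> {0..}" using T by auto
        show "0 \<le> mm" using mm by simp
        fix r :: real assume r: "0 < r" "r < T"
        show "Wt (x r) \<le> - mm" using q2(2)[OF inK[of r]] r by (simp add: mm_def)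
      qed
      also have "\<dots> = - mm" using mm by (simp add: T_def field_simps)
      finally have "V (x T) < 0" using mm by simp
      moreover have "0 \<le> V (x T)" using V_nonneg[of "x T"] lb1[OF T] wlpos by simp
      ultimately show False by simp
    qed
    then obtain t1 where t1: "t1 \<ge> 0" "dist (x t1) eq < \<delta>" by blast
    have "\<forall>t\<in>{0..}. t1 \<le> t \<longrightarrow> dist (x t) eq < \<epsilon>"
      using dst[of x "{0..}" t1] sol x0 t1 by simp
    then show "\<forall>\<^sub>F t in at_top. dist (x t) eq < \<epsilon>"
      unfolding eventually_at_top_linorder using t1 by (intro exI[of _ t1]) auto
  qed
qed

end

lemma ln_lip:
  fixes a b cc :: real
  assumes "0 < cc" "cc \<le> a" "cc \<le> b"
  shows "\<bar>ln a - ln b\<bar> \<le> \<bar>a - b\<bar> / cc"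
proof -
  have *: "ln u - ln v \<le> (u - v) / cc" if uv: "cc \<le> u" "cc \<le> v" "v \<le> u" for u v
  proof -
    have u: "0 < u" "0 < v" using uv assms(1) by auto
    have "ln u - ln v = ln (u / v)" using u by (simp add: ln_div)
    also have "\<dots> \<le> u / v - 1" using u by (intro ln_le_minus_one) simp
    also have "\<dots> = (u - v) / v" using u by (simp add: field_simps)
    also have "\<dots> \<le> (u - v) / cc" using uv assms(1) by (intro divide_left_mono) auto
    finally show ?thesis .
  qed
  show ?thesis
  proof (cases "b \<le> a")
    case True
    have "0 \<le> ln a - ln b" using True assms by simp
    then show ?thesis using *[OF assms(2,3) True] True by simp
  next
    case False
    have "0 \<le> ln b - ln a" using False assms by simp
    then show ?thesis using *[OF assms(3,2)] False by simp
  qed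
qed

context sys begin

lemma Fc_lip:
  assumes cc: "0 < cc"
  shows "norm (Fc cc p - Fc cc q) \<le> ((L + 1 + alpha / cc) / J + h / J * (L + 1)) * norm (p - q)"
proof -
  define n where "n = norm (p - q)"
  define a where "a = max (fst p) cc"
  define b where "b = max (fst q) cc"
  have ab: "cc \<le> a" "cc \<le> b" "0 < a" "0 < b" using cc by (auto simp: a_def b_def)
  have n1: "\<bar>fst p - fst q\<bar> \<le> n" using dist_fst_le[of p q] by (simp add: dist_norm n_def dist_real_def)
  have n2: "\<bar>snd p - snd q\<bar> \<le> n" using dist_snd_le[of p q] by (simp add: dist_norm n_def dist_real_def)
  have abn: "\<bar>a - b\<bar> \<le> n" using n1 by (auto simp: a_def b_def max_def)
  have gab: "\<bar>g a - g b\<bar> \<le> L * n"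
    using g_lip[OF ab(4,3)] L_pos abn by (meson mult_left_mono less_imp_le order_trans)
  have lab: "\<bar>alpha * ln (a / wrd) - alpha * ln (b / wrd)\<bar> \<le> alpha / cc * n"
  proof -
    have "\<bar>alpha * ln (a / wrd) - alpha * ln (b / wrd)\<bar> = alpha * \<bar>ln a - ln b\<bar>"
      using ab wrd alpha by (simp add: ln_div abs_mult right_diff_distrib[symmetric])
    also have "\<dots> \<le> alpha * (\<bar>a - b\<bar> / cc)" using ln_lip[OF cc ab(1,2)] alpha by (intro mult_left_mono) auto
    also have "\<dots> \<le> alpha * (n / cc)" using abn alpha cc by (intro mult_left_mono divide_right_mono) auto
    finally show ?thesis by simp
  qed
  define X where "X = snd p + alpha * ln (a / wrd)"
  define Y where "Y = snd q + alpha * ln (b / wrd)"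
  have XY: "\<bar>max X 0 - max Y 0\<bar> \<le> n + alpha / cc * n"
  proof -
    have "\<bar>max X 0 - max Y 0\<bar> \<le> \<bar>X - Y\<bar>" by (auto simp: max_def)
    also have "\<dots> \<le> \<bar>snd p - snd q\<bar> + \<bar>alpha * ln (a / wrd) - alpha * ln (b / wrd)\<bar>" by (simp add: X_def Y_def)
    also have "\<dots> \<le> n + alpha / cc * n" using n2 lab by simp
    finally show ?thesis .
  qed
  have f1: "\<bar>fst (Fc cc p - Fc cc q)\<bar> \<le> (L + 1 + alpha / cc) / J * n"
  proof -
    have "fst (Fc cc p - Fc cc q) = ((g a - g b) - (max X 0 - max Y 0)) / J"
      by (simp add: Fc_fst a_def b_def X_def Y_def diff_divide_distrib)
    then have "\<bar>fst (Fc cc p - Fc cc q)\<bar> = \<bar>(g a - g b) - (max X 0 - max Y 0)\<bar> / J" using J by simp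
    also have "\<dots> \<le> (L * n + (n + alpha / cc * n)) / J"
      using gab XY J by (intro divide_right_mono) (auto intro: order_trans[OF abs_triangle_ineq4])
    also have "\<dots> = (L + 1 + alpha / cc) / J * n" by (simp add: field_simps)
    finally show ?thesis .
  qed
  have f2: "\<bar>snd (Fc cc p - Fc cc q)\<bar> \<le> h / J * (L + 1) * n"
  proof -
    have "snd (Fc cc p - Fc cc q) = h / J * ((g a - g b) - (snd p - snd q))"
      by (simp add: Fc_snd a_def b_def algebra_simps)
    then have "\<bar>snd (Fc cc p - Fc cc q)\<bar> = h / J * \<bar>(g a - g b) - (snd p - snd q)\<bar>" using J h_pos by (simp add: abs_mult)
    also have "\<dots> \<le> h / J * (L * n + n)"
      using gab n2 J h_pos by (intro mult_left_mono) (auto intro: order_trans[OF abs_triangle_ineq4])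
    also have "\<dots> = h / J * (L + 1) * n" by (simp add: field_simps)
    finally show ?thesis .
  qed
  have "norm (Fc cc p - Fc cc q) = norm (fst (Fc cc p - Fc cc q), snd (Fc cc p - Fc cc q))"
    by (simp only: prod.collapse)
  also have "\<dots> \<le> norm (fst (Fc cc p - Fc cc q)) + norm (snd (Fc cc p - Fc cc q))"
    by (rule norm_Pair_le)
  also have "\<dots> \<le> (L + 1 + alpha / cc) / J * n + h / J * (L + 1) * n" using f1 f2 by simp
  also have "\<dots> = ((L + 1 + alpha / cc) / J + h / J * (L + 1)) * n" by (simp add: algebra_simps)
  finally show ?thesis by (simp add: n_def)
qed

lemma exist:
  assumes p: "p \<in> D"
  shows "\<exists>x. is_solution F x {0..} \<and> x 0 = p"
proof -
  define Mx where "Mx = max (snd p) (L * w1)"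
  define wl where "wl = min (fst p) (wrd * exp (- Mx / alpha))"
  define cc where "cc = wl / 2"
  have pw: "0 < fst p" "fst p \<le> w1" using p by (auto simp: D_def)
  have wlpos: "0 < wl" using pw wrd by (simp add: wl_def)
  have cc: "0 < cc" "cc < wl" "cc \<le> w1" using wlpos pw by (auto simp: cc_def wl_def)
  define K where "K = (L + 1 + alpha / cc) / J + h / J * (L + 1)"
  have K: "0 \<le> K" using L_pos alpha cc J h_pos by (simp add: K_def)
  obtain x where x0: "x 0 = p" and dx: "\<forall>t\<ge>0. (x has_vector_derivative Fc cc (x t)) (at t within {0..})"
    using picard_exists[of "Fc cc" K p, OF _ K] Fc_lip[OF cc(1)] unfolding K_def by blast
  have iv: "is_interval {0::real..}" by (simp add: is_interval_1)
  have sol: "sol cc x {0..}" unfolding sol_def using iv dx cc by auto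
  have ub1: "fst (x t) \<le> w1" if "t \<in> {0..}" for t by (rule B1[OF sol cc(3) _ that]) (simp add: x0 pw)
  have ub2: "snd (x t) \<le> Mx" if "t \<in> {0..}" for t
    by (rule B2[OF sol cc(3) _ _ _ that]) (use pw x0 in \<open>auto simp: Mx_def\<close>)
  have lb1: "wl \<le> fst (x t)" if "t \<in> {0..}" for t
    by (rule B4[OF sol cc(2) _ ub2 wlpos _ _ that]) (use pw x0 in \<open>auto simp: wl_def\<close>)
  have "is_solution F x {0..}"
    unfolding is_solution_def
  proof (intro conjI ballI iv)
    fix t :: real assume t: "t \<in> {0..}"
    show "0 < fst (x t)" using lb1[OF t] wlpos by simp
    have "Fc cc (x t) = F (x t)" using lb1[OF t] cc by (simp add: Fc_def)
    then show "(x has_vector_derivative F (x t)) (at t within {0..})" using dx t by auto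
  qed auto
  then show ?thesis using x0 by blast
qed

lemma equil: "{p \<in> D. F p = (0, 0)} = {eq}"
proof
  have eqD: "eq \<in> D" using wrd by (simp add: eq_def D_def)
  have "F eq = (0, 0)"
    using g_nonneg[of wrd] wrd by (simp add: F_def cl_field_def eq_def)
  then show "{eq} \<subseteq> {p \<in> D. F p = (0, 0)}" using eqD by simp
  show "{p \<in> D. F p = (0, 0)} \<subseteq> {eq}"
  proof
    fix p assume "p \<in> {p \<in> D. F p = (0, 0)}"
    then have pD: "p \<in> D" and Fp: "F p = (0, 0)" by auto
    have w: "0 < fst p" "fst p \<le> w1" using pD by (auto simp: D_def)
    have "snd (F p) = 0" using Fp by simp
    then have "h / J * (g (fst p) - snd p) = 0" by (simp add: F_snd)
    then have gh: "snd p = g (fst p)" using h_pos J by simp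
    have "fst (F p) = 0" using Fp by simp
    then have f1: "g (fst p) = max (g (fst p) + alpha * ln (fst p / wrd)) 0" using J by (simp add: F_fst gh)
    have "ln (fst p / wrd) = 0"
    proof (rule ccontr)
      assume ne: "ln (fst p / wrd) \<noteq> 0"
      show False
      proof (cases "ln (fst p / wrd) > 0")
        case True
        then have "g (fst p) + alpha * ln (fst p / wrd) > g (fst p)" using alpha by simp
        then show False using f1 by (simp add: max_def split: if_splits)
      next
        case False
        then have neg: "ln (fst p / wrd) < 0" using ne by simp
        then have "fst p / wrd < 1" using w wrd by simp
        then have "fst p < wrd" using wrd by (simp add: divide_less_eq)
        then have gp: "g (fst p) > 0" using gpos[OF w(1)] wrd by simp
        have "g (fst p) + alpha * ln (fst p / wrd) < g (fst p)" using neg alpha by (simp add: mult_pos_neg)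
        then show False using f1 gp by (simp add: max_def split: if_splits)
      qed
    qed
    then have "fst p / wrd = 1" using w wrd by simp
    then have "fst p = wrd" using wrd by simp
    then show "p \<in> {eq}" using gh by (cases p) (simp add: eq_def)
  qed
qed

theorem main_sys:
  "{p \<in> D. F p = (0, 0)} = {eq}
   \<and> (\<forall>x S. is_solution F x S \<and> x 0 \<in> D \<longrightarrow> (\<forall>t\<in>S. x t \<in> D))
   \<and> (\<forall>\<epsilon>>0. \<exists>\<delta>>0. \<forall>x S. is_solution F x S \<and> x 0 \<in> D \<and> dist (x 0) eq < \<delta>
          \<longrightarrow> (\<forall>t\<in>S. dist (x t) eq < \<epsilon>))
   \<and> (\<forall>p\<in>D. \<exists>x. is_solution F x {0..} \<and> x 0 = p)
   \<and> (\<forall>x. is_solution F x {0..} \<and> x 0 \<in> D \<longrightarrow> (x \<longlongrightarrow> eq) at_top)"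
proof (intro conjI allI impI ballI)
  show "{p \<in> D. F p = (0, 0)} = {eq}" by (rule equil)
  show "x t \<in> D" if "is_solution F x S \<and> x 0 \<in> D" "t \<in> S" for x S t
    using inv that by blast
  show "\<exists>\<delta>>0. \<forall>x S. is_solution F x S \<and> x 0 \<in> D \<and> dist (x 0) eq < \<delta> \<longrightarrow> (\<forall>t\<in>S. dist (x t) eq < \<epsilon>)"
    if e: "\<epsilon> > 0" for \<epsilon>
  proof -
    obtain \<delta> where d: "\<delta> > 0" "\<And>x S t1. is_solution F x S \<and> x 0 \<in> D \<and> t1 \<in> S \<and> dist (x t1) eq < \<delta>
           \<Longrightarrow> (\<forall>t\<in>S. t1 \<le> t \<longrightarrow> dist (x t) eq < \<epsilon>)"
      using stab[OF e] by blast
    show ?thesis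
    proof (intro exI[of _ \<delta>] conjI d(1) allI impI ballI)
      fix x S t assume A: "is_solution F x S \<and> x 0 \<in> D \<and> dist (x 0) eq < \<delta>" and t: "t \<in> S"
      have "0 \<in> S" "t \<ge> 0" using A t by (auto simp: is_solution_def)
      then show "dist (x t) eq < \<epsilon>" using d(2)[of x S 0] A t by auto
    qed
  qed
  show "\<exists>x. is_solution F x {0..} \<and> x 0 = p" if "p \<in> D" for p by (rule exist[OF that])
  show "(x \<longlongrightarrow> eq) at_top" if "is_solution F x {0..} \<and> x 0 \<in> D" for x
    using conv that by blast
qed

end


theorem theorem1:
  fixes rho A R J Cf a' bmin bmax beta Vw :: real
    and Cp :: "real \<Rightarrow> real \<Rightarrow> real"
    and w1 glo ghi wrd alpha h :: real
  defines "g \<equiv> gfun rho A R Cf a' Cp beta Vw"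
  defines "F \<equiv> cl_field J alpha h wrd g"
  defines "D \<equiv> {p :: real \<times> real. 0 < fst p \<and> fst p \<le> w1}"
  defines "eq \<equiv> (wrd, g wrd)"
  assumes pos: "rho > 0" "A > 0" "R > 0" "J > 0" "Cf > 0" "a' < 0"
    and beta: "beta \<in> {bmin..bmax}" and Vw: "Vw > 0"
    and A1: "C1_on2 Cp ({0<..} \<times> {bmin..bmax})"
    and A2: "\<exists>c>0. \<forall>l>0. \<forall>b\<in>{bmin..bmax}. Cp l b \<le> c * l"
    and A3: "\<forall>b\<in>{bmin..bmax}. \<exists>l1>0. \<forall>l\<in>{0<..<l1}. Cp l b > 0"
    and A4: "\<exists>clo<0. \<exists>chi>0. \<forall>l>0. \<forall>b\<in>{bmin..bmax}.
               clo \<le> deriv (\<lambda>l'. Cp l' b / l') l \<and> deriv (\<lambda>l'. Cp l' b / l') l \<le> chi"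
    and w1: "w1 > 0" "g w1 = 0" "\<forall>w\<in>{0<..<w1}. g w > 0"
    and gam: "glo < 0" "ghi > 0" "\<forall>w>0. glo \<le> deriv g w \<and> deriv g w \<le> ghi"
    and wrd: "0 < wrd" "wrd \<le> w1"
    and alpha: "alpha > 0"
    and hcond: "if ghi \<ge> - glo / 3 then h > ghi
                else h > - ((ghi - glo)^2 / (8 * (glo + ghi)))"
  shows "{p \<in> D. F p = (0, 0)} = {eq}
         \<and> (\<forall>x S. is_solution F x S \<and> x 0 \<in> D \<longrightarrow> (\<forall>t\<in>S. x t \<in> D))
         \<and> (\<forall>\<epsilon>>0. \<exists>\<delta>>0. \<forall>x S. is_solution F x S \<and> x 0 \<in> D \<and> dist (x 0) eq < \<delta>
                \<longrightarrow> (\<forall>t\<in>S. dist (x t) eq < \<epsilon>))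
         \<and> (\<forall>p\<in>D. \<exists>x. is_solution F x {0..} \<and> x 0 = p)
         \<and> (\<forall>x. is_solution F x {0..} \<and> x 0 \<in> D \<longrightarrow> (x \<longlongrightarrow> eq) at_top)"
proof -
  obtain Dl Db :: "real \<times> real \<Rightarrow> real" where
    Dp: "\<forall>p\<in>{0<..} \<times> {bmin..bmax}. ((\<lambda>q. Cp (fst q) (snd q)) has_derivative
                   (\<lambda>u. Dl p * fst u + Db p * snd u)) (at p within {0<..} \<times> {bmin..bmax})"
    using A1 unfolding C1_on2_def by blast
  have dphi: "((\<lambda>l. Cp l beta) has_real_derivative Dl (l, beta)) (at l)" if l: "0 < l" for l
  proof -
    have dg: "((\<lambda>l. (l, beta)) has_derivative (\<lambda>u. (u, 0))) (at l within {0<..})"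
      by (intro derivative_eq_intros) auto
    have img: "(\<lambda>l. (l, beta)) ` {0<..} \<subseteq> {0<..} \<times> {bmin..bmax}" using beta by auto
    have "((\<lambda>l. Cp (fst (l, beta)) (snd (l, beta))) has_derivative
        (\<lambda>y. Dl (l, beta) * fst (y, 0::real) + Db (l, beta) * snd (y, 0::real))) (at l within {0<..})"
      by (rule has_derivative_in_compose2[OF _ img _ dg]) (use Dp l in auto)
    then have "((\<lambda>l. Cp l beta) has_derivative (\<lambda>y. Dl (l, beta) * y)) (at l within {0<..})" by simp
    moreover have "at l within {0<..} = at l" using l by (intro at_within_open) auto
    ultimately have "((\<lambda>l. Cp l beta) has_derivative (\<lambda>y. Dl (l, beta) * y)) (at l)" by simp
    then show ?thesis by (simp add: has_field_derivative_def)
  qed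
  have gder: "(g has_real_derivative deriv g w) (at w)" if w: "0 < w" for w
  proof -
    have lam: "((\<lambda>w. w * R / Vw) has_real_derivative R / Vw) (at w)"
      using DERIV_cdivide[OF DERIV_cmult_right[OF DERIV_ident, of R], of Vw] by simp
    have dC: "((\<lambda>w. Cp (w * R / Vw) beta) has_real_derivative Dl (w * R / Vw, beta) * (R / Vw)) (at w)"
      by (rule DERIV_chain2[OF dphi lam]) (use w pos Vw in simp)
    have geq: "g = (\<lambda>w. (1/2 * rho * A * Cp (w * R / Vw) beta * Vw ^ 3) / w - a' - Cf * w)"
      unfolding g_def by (rule ext) (simp only: gfun_def)
    have d1: "((\<lambda>w. 1/2 * rho * A * Cp (w * R / Vw) beta * Vw ^ 3) has_real_derivative
        1/2 * rho * A * (Dl (w * R / Vw, beta) * (R / Vw)) * Vw ^ 3) (at w)"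
      by (rule DERIV_cmult_right[OF DERIV_cmult[OF dC]])
    note d2 = DERIV_divide[OF d1 DERIV_ident]
    have "\<exists>D. (g has_real_derivative D) (at w)"
      unfolding geq using DERIV_diff[OF DERIV_diff[OF d2 DERIV_const] DERIV_cmult[OF DERIV_ident]] w by blast
    then obtain D where "(g has_real_derivative D) (at w)" by blast
    then show ?thesis using DERIV_imp_deriv by metis
  qed
  have hgt: "h > ghi" and
    cex: "\<exists>c>0. (1 + c * glo)^2 < 4 * c * h \<and> (1 + c * ghi)^2 < 4 * c * h"
  proof -
    have "h > ghi \<and> (\<exists>c>0. (1 + c * glo)^2 < 4 * c * h \<and> (1 + c * ghi)^2 < 4 * c * h)"
    proof (cases "ghi \<ge> - glo / 3")
      case True
      then have hh: "h > ghi" using hcond by simp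
      define c where "c = 1 / ghi"
      have c: "c > 0" using gam by (simp add: c_def)
      have "4 * c * h > 4" using hh gam by (simp add: c_def field_simps)
      moreover have "(1 + c * ghi)^2 = 4" using gam by (simp add: c_def)
      moreover have "(1 + c * glo)^2 \<le> 4"
      proof -
        have "1 + c * glo = (ghi + glo) / ghi" using gam by (simp add: c_def field_simps)
        moreover have "-2 \<le> (ghi + glo) / ghi" using True gam by (simp add: field_simps)
        moreover have "(ghi + glo) / ghi \<le> 2" using gam by (simp add: field_simps)
        ultimately have "\<bar>1 + c * glo\<bar> \<le> 2" by simp
        then have "\<bar>1 + c * glo\<bar>^2 \<le> 2^2" by (intro power_mono) auto
        then show ?thesis by simp
      qed
      ultimately show ?thesis using c hh by force
    next
      case False
      define s where "s = glo + ghi"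
      have s: "s < 0" using False gam by (simp add: s_def)
      have hh: "h > - ((ghi - glo)^2 / (8 * s))" using hcond False by (simp add: s_def)
      define c where "c = - 2 / s"
      have c: "c > 0" using s by (simp add: c_def)
      have e1: "1 + c * glo = (ghi - glo) / s" using s by (simp add: c_def s_def field_simps)
      have e2: "1 + c * ghi = - ((ghi - glo) / s)" using s by (simp add: c_def s_def field_simps)
      have sq: "((ghi - glo) / s)^2 < 4 * c * h"
      proof -
        have "(ghi - glo)^2 < - 8 * h * s"
        proof -
          have "- ((ghi - glo)^2 / (8 * s)) * (- 8 * s) = (ghi - glo)^2" using s by (simp add: field_simps)
          moreover have "- ((ghi - glo)^2 / (8 * s)) * (- 8 * s) < h * (- 8 * s)"
            using hh s by (intro mult_strict_right_mono) auto
          ultimately show ?thesis by (simp add: algebra_simps)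
        qed
        then have "(ghi - glo)^2 / s^2 < (- 8 * h * s) / s^2" using s by (intro divide_strict_right_mono) auto
        moreover have "(- 8 * h * s) / s^2 = 4 * c * h" using s by (simp add: c_def power2_eq_square field_simps)
        ultimately show ?thesis by (simp add: power_divide)
      qed
      have "h > ghi"
      proof -
        have "(1 + c * ghi)^2 < 4 * c * h" using sq e2 by simp
        moreover have "4 * c * ghi \<le> (1 + c * ghi)^2"
        proof -
          have "0 \<le> (1 - c * ghi)^2" by simp
          then show ?thesis by (simp add: power2_eq_square algebra_simps)
        qed
        ultimately have "4 * c * ghi < 4 * c * h" by simp
        then show ?thesis using c by simp
      qed
      then show ?thesis using c sq e1 e2 by (intro conjI exI[of _ c]) auto
    qed
    then show "h > ghi" "\<exists>c>0. (1 + c * glo)^2 < 4 * c * h \<and> (1 + c * ghi)^2 < 4 * c * h" by auto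
  qed
  obtain cc where cc: "cc > 0" "(1 + cc * glo)^2 < 4 * cc * h" "(1 + cc * ghi)^2 < 4 * cc * h"
    using cex by blast
  interpret S: sys g J alpha h wrd w1 glo ghi cc
  proof
    show "J > 0" "alpha > 0" "0 < wrd" "wrd \<le> w1" "glo < 0" "ghi > 0" "g w1 = 0"
      using pos alpha wrd gam w1 by auto
    show "\<And>w. w > 0 \<Longrightarrow> (g has_real_derivative deriv g w) (at w)" by (rule gder)
    show "\<And>w. w > 0 \<Longrightarrow> glo \<le> deriv g w \<and> deriv g w \<le> ghi" using gam by auto
    show "\<And>w. 0 < w \<Longrightarrow> w < w1 \<Longrightarrow> g w > 0" using w1 by auto
    show "cc > 0" "(1 + cc * glo)^2 < 4 * cc * h" "(1 + cc * ghi)^2 < 4 * cc * h" using cc by auto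
  qed
  have eF: "S.F = F" by (simp add: S.F_def F_def)
  have eD: "S.D = D" by (simp add: S.D_def D_def)
  have eE: "S.eq = eq" by (simp add: S.eq_def eq_def)
  show ?thesis using S.main_sys unfolding eF eD eE .
qed


end
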